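(* Let $m \ge 1$ and let $TW_{m+2}'$ be the commutator subgroup of the twin group $TW_{m+2}$. Then $TW_{m+2}'$ has the following presentation. Generators: $\beta_p(j)$ for all integers $0 \le p < j \le m$. Defining relations: for all integers $j,k,t,l$ with $1 \le k \le j$, $j+2 \le t \le m$ and $3 \le l \le t-j$, $$\beta_{j-k}(j)\,\beta_{t-(j+l)}(t) = \beta_{t-(j+l)}(t)\,\beta_{j-k}(j),$$ and for all integers $j,k,t$ with $1 \le k \le j$ and $j+2 \le t \le m$, $$\beta_{t-k}(t) = \beta_{j-k}(j)^{-1}\,\beta_{t-(j+1)}(t)\,\beta_{j-k}(j).$$ Here the abstract generator $\beta_p(j)$ corresponds to the element of $TW_{m+2}$ defined in the context.
   Context: For $n \ge 2$, the twin group $TW_n$ is the group with generators $\tau_1,\dots,\tau_{n-1}$ and defining relations $\tau_i^2=1$ for all $i$, and $\tau_i\tau_j=\tau_j\tau_i$ whenever $|i-j|>1$. (For $m\ge1$, $TW_{m+2}$ is isomorphic to Grothendieck's $m$-dimensional cartographical group.) $G'$ denotes the commutator subgroup of a group $G$. For $1 \le j \le n-2$ and $0 \le p < j$, define the element $$\beta_p(j) := \tau_{j-p}\tau_{j-p+1}\cdots\tau_{j-1}\,(\tau_{j+1}\tau_j\tau_{j+1}\tau_j)\,\tau_{j-1}\cdots\tau_{j-p+1}\tau_{j-p} \in TW_n,$$ so that $\beta_0(j)=\tau_{j+1}\tau_j\tau_{j+1}\tau_j$. *)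

theory Defs
  imports "HOL-Algebra.Generated_Groups"
begin

text \<open>A word over an alphabet is a list of letters (a, e), where e = False means the
generator a and e = True means its inverse.\<close>

type_synonym 'a word = "('a \<times> bool) list"

definition words :: "'a set \<Rightarrow> 'a word set" where
  "words S = {w. \<forall>x\<in>set w. fst x \<in> S}"

definition inv_word :: "'a word \<Rightarrow> 'a word" where
  "inv_word w = rev (map (\<lambda>(a, e). (a, \<not> e)) w)"

inductive pres_eq :: "'a set \<Rightarrow> 'a word set \<Rightarrow> 'a word \<Rightarrow> 'a word \<Rightarrow> bool"
  for S :: "'a set" and R :: "'a word set" where
  refl: "w \<in> words S \<Longrightarrow> pres_eq S R w w"
| sym: "pres_eq S R u v \<Longrightarrow> pres_eq S R v u"
| trans: "pres_eq S R u v \<Longrightarrow> pres_eq S R v w \<Longrightarrow> pres_eq S R u w"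
| cancel: "\<lbrakk>a \<in> S; u \<in> words S; v \<in> words S\<rbrakk>
     \<Longrightarrow> pres_eq S R (u @ [(a, e), (a, \<not> e)] @ v) (u @ v)"
| relator: "\<lbrakk>r \<in> R; r \<in> words S; u \<in> words S; v \<in> words S\<rbrakk>
     \<Longrightarrow> pres_eq S R (u @ r @ v) (u @ v)"

definition pres_class :: "'a set \<Rightarrow> 'a word set \<Rightarrow> 'a word \<Rightarrow> 'a word set" where
  "pres_class S R w = {v. pres_eq S R w v}"

definition presented_group :: "'a set \<Rightarrow> 'a word set \<Rightarrow> 'a word set monoid" where
  "presented_group S R =
     \<lparr> carrier = pres_class S R ` words S,
       mult = (\<lambda>X Y. \<Union>x\<in>X. \<Union>y\<in>Y. pres_class S R (x @ y)),
       one = pres_class S R [] \<rparr>"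

definition gen_word :: "'a list \<Rightarrow> 'a word" where
  "gen_word xs = map (\<lambda>a. (a, False)) xs"

definition commutator_word :: "'a \<Rightarrow> 'a \<Rightarrow> 'a word" where
  "commutator_word a b = [(a, False), (b, False), (a, True), (b, True)]"

text \<open>Generators tau_1, ..., tau_(n-1), encoded by their indices.\<close>

definition TW_gens :: "nat \<Rightarrow> nat set" where
  "TW_gens n = {1..<n}"

definition TW_rels :: "nat \<Rightarrow> nat word set" where
  "TW_rels n =
     {gen_word [i, i] | i. i \<in> TW_gens n} \<union>
     {commutator_word i j | i j. i \<in> TW_gens n \<and> j \<in> TW_gens n \<and> (i + 1 < j \<or> j + 1 < i)}"

definition TW :: "nat \<Rightarrow> nat word set monoid" where
  "TW n = presented_group (TW_gens n) (TW_rels n)"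

definition beta_word :: "nat \<Rightarrow> nat \<Rightarrow> nat word" where
  "beta_word p j = gen_word ([j - p..<j] @ [j + 1, j, j + 1, j] @ rev [j - p..<j])"

definition beta :: "nat \<Rightarrow> nat \<Rightarrow> nat \<Rightarrow> nat word set" where
  "beta n p j = pres_class (TW_gens n) (TW_rels n) (beta_word p j)"

text \<open>Abstract generator (p, j) stands for beta_p(j).\<close>

definition comm_gens :: "nat \<Rightarrow> (nat \<times> nat) set" where
  "comm_gens m = {(p, j). p < j \<and> j \<le> m}"

text \<open>Relation a = b is encoded as relator a b^(-1).\<close>

definition comm_rels :: "nat \<Rightarrow> (nat \<times> nat) word set" where
  "comm_rels m =
     {commutator_word (j - k, j) (t - (j + l), t) | j k t l.
        1 \<le> k \<and> k \<le> j \<and> j + 2 \<le> t \<and> t \<le> m \<and> 3 \<le> l \<and> l \<le> t - j} \<union>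
     {[((t - k, t), False)] @
        inv_word [((j - k, j), True), ((t - (j + 1), t), False), ((j - k, j), False)] | j k t.
        1 \<le> k \<and> k \<le> j \<and> j + 2 \<le> t \<and> t \<le> m}"

definition comm_pres :: "nat \<Rightarrow> (nat \<times> nat) word set monoid" where
  "comm_pres m = presented_group (comm_gens m) (comm_rels m)"

end

theory Submission
  imports Defs
begin

lemma words_append[simp]: "u @ v \<in> words S \<longleftrightarrow> u \<in> words S \<and> v \<in> words S"
  by (auto simp: words_def)
lemma words_Cons[simp]: "x # v \<in> words S \<longleftrightarrow> fst x \<in> S \<and> v \<in> words S"
  by (auto simp: words_def)
lemma words_Nil[simp]: "[] \<in> words S"
  by (auto simp: words_def)
lemma words_inv_word[simp]: "inv_word u \<in> words S \<longleftrightarrow> u \<in> words S"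
  by (auto simp: words_def inv_word_def)

lemma inv_word_Nil[simp]: "inv_word [] = []" by (simp add: inv_word_def)
lemma inv_word_Cons[simp]: "inv_word (x # u) = inv_word u @ [(fst x, \<not> snd x)]"
  by (cases x) (simp add: inv_word_def)
lemma inv_word_append[simp]: "inv_word (u @ v) = inv_word v @ inv_word u"
  by (simp add: inv_word_def)

lemma pres_eq_words: "pres_eq S R u v \<Longrightarrow> u \<in> words S \<and> v \<in> words S"
  by (induction rule: pres_eq.induct) auto

lemma pres_eq_app_left: "pres_eq S R u v \<Longrightarrow> w \<in> words S \<Longrightarrow> pres_eq S R (w @ u) (w @ v)"
proof (induction rule: pres_eq.induct)
  case (refl x) then show ?case by (simp add: pres_eq.refl)
next
  case (sym u v) then show ?case by (blast intro: pres_eq.sym)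
next
  case (trans u v x) then show ?case by (blast intro: pres_eq.trans)
next
  case (cancel a u v e)
  then show ?case using pres_eq.cancel[of a S "w @ u" v R e] by simp
next
  case (relator r u v)
  then show ?case using pres_eq.relator[of r R S "w @ u" v] by simp
qed

lemma pres_eq_app_right: "pres_eq S R u v \<Longrightarrow> w \<in> words S \<Longrightarrow> pres_eq S R (u @ w) (v @ w)"
proof (induction rule: pres_eq.induct)
  case (refl x) then show ?case by (simp add: pres_eq.refl)
next
  case (sym u v) then show ?case by (blast intro: pres_eq.sym)
next
  case (trans u v x) then show ?case by (blast intro: pres_eq.trans)
next
  case (cancel a u v e)
  then show ?case using pres_eq.cancel[of a S u "v @ w" R e] by simp
next
  case (relator r u v)
  then show ?case using pres_eq.relator[of r R S u "v @ w"] by simp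
qed

lemma pres_eq_app: "pres_eq S R a b \<Longrightarrow> pres_eq S R c d \<Longrightarrow> pres_eq S R (a @ c) (b @ d)"
  by (meson pres_eq.trans pres_eq_app_left pres_eq_app_right pres_eq_words)

lemma pres_eq_inv_right: "u \<in> words S \<Longrightarrow> pres_eq S R (u @ inv_word u) []"
proof (induction u rule: rev_induct)
  case Nil then show ?case by (simp add: pres_eq.refl)
next
  case (snoc x u)
  obtain a e where x: "x = (a, e)" by (cases x)
  have "pres_eq S R (u @ [(a, e), (a, \<not> e)] @ inv_word u) (u @ inv_word u)"
    using snoc by (intro pres_eq.cancel) (auto simp: x)
  then show ?case using snoc by (auto simp: x inv_word_def intro: pres_eq.trans)
qed

lemma pres_eq_inv_left: "u \<in> words S \<Longrightarrow> pres_eq S R (inv_word u @ u) []"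
proof (induction u)
  case Nil then show ?case by (simp add: pres_eq.refl)
next
  case (Cons x u)
  obtain a e where x: "x = (a, e)" by (cases x)
  have "pres_eq S R (inv_word u @ [(a, \<not> e), (a, \<not> \<not> e)] @ u) (inv_word u @ u)"
    using Cons by (intro pres_eq.cancel) (auto simp: x)
  then show ?case using Cons by (auto simp: x intro: pres_eq.trans)
qed

lemma pres_class_eq: "pres_eq S R u v \<Longrightarrow> pres_class S R u = pres_class S R v"
  unfolding pres_class_def by (blast intro: pres_eq.sym pres_eq.trans)

lemma pres_class_eqD: "pres_class S R u = pres_class S R v \<Longrightarrow> v \<in> words S \<Longrightarrow> pres_eq S R u v"
  unfolding pres_class_def by (metis mem_Collect_eq pres_eq.refl)

lemma pres_class_self: "u \<in> words S \<Longrightarrow> u \<in> pres_class S R u"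
  by (simp add: pres_class_def pres_eq.refl)

lemma pres_mult:
  assumes "u \<in> words S" "v \<in> words S"
  shows "mult (presented_group S R) (pres_class S R u) (pres_class S R v) = pres_class S R (u @ v)"
proof -
  have "pres_class S R (x @ y) = pres_class S R (u @ v)"
    if "x \<in> pres_class S R u" "y \<in> pres_class S R v" for x y
    using that by (intro pres_class_eq) (auto simp: pres_class_def intro: pres_eq.sym pres_eq_app)
  note that = this
  have "(\<Union>x\<in>pres_class S R u. \<Union>y\<in>pres_class S R v. pres_class S R (x @ y)) = pres_class S R (u @ v)"
  proof (rule equalityI)
    show "(\<Union>x\<in>pres_class S R u. \<Union>y\<in>pres_class S R v. pres_class S R (x @ y)) \<subseteq> pres_class S R (u @ v)"
      using that by (intro UN_least) simp
  next
    have "pres_class S R (u @ v) \<subseteq> (\<Union>y\<in>pres_class S R v. pres_class S R (u @ y))"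
      by (rule UN_upper[OF pres_class_self[OF assms(2)]])
    also have "\<dots> \<subseteq> (\<Union>x\<in>pres_class S R u. \<Union>y\<in>pres_class S R v. pres_class S R (x @ y))"
      by (rule UN_upper[OF pres_class_self[OF assms(1)]])
    finally show "pres_class S R (u @ v) \<subseteq> (\<Union>x\<in>pres_class S R u. \<Union>y\<in>pres_class S R v. pres_class S R (x @ y))" .
  qed
  then show ?thesis by (simp add: presented_group_def)
qed

lemma presented_group_is_group: "group (presented_group S R)"
proof (rule groupI)
  let ?G = "presented_group S R"
  fix x y z assume xyz: "x \<in> carrier ?G" "y \<in> carrier ?G" "z \<in> carrier ?G"
  then obtain u v w where uvw: "u \<in> words S" "v \<in> words S" "w \<in> words S"
    "x = pres_class S R u" "y = pres_class S R v" "z = pres_class S R w"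
    by (auto simp: presented_group_def)
  have "x \<otimes>\<^bsub>?G\<^esub> y = pres_class S R (u @ v)" using uvw by (simp add: pres_mult)
  moreover have "pres_class S R (u @ v) \<in> carrier ?G" using uvw by (auto simp: presented_group_def)
  ultimately show "x \<otimes>\<^bsub>?G\<^esub> y \<in> carrier ?G" by simp
  show "x \<otimes>\<^bsub>?G\<^esub> y \<otimes>\<^bsub>?G\<^esub> z = x \<otimes>\<^bsub>?G\<^esub> (y \<otimes>\<^bsub>?G\<^esub> z)"
    using uvw by (simp add: pres_mult)
next
  let ?G = "presented_group S R"
  show "\<one>\<^bsub>?G\<^esub> \<in> carrier ?G" by (auto simp: presented_group_def)
  fix x assume "x \<in> carrier ?G"
  then obtain u where u: "u \<in> words S" "x = pres_class S R u" by (auto simp: presented_group_def)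
  show "\<one>\<^bsub>?G\<^esub> \<otimes>\<^bsub>?G\<^esub> x = x"
    using u pres_mult[of "[]" S u R] by (simp add: presented_group_def)
  have "pres_class S R (inv_word u) \<otimes>\<^bsub>?G\<^esub> x = \<one>\<^bsub>?G\<^esub>"
    using u pres_mult[of "inv_word u" S u R] pres_eq_inv_left[of u S R]
    by (simp add: presented_group_def pres_class_eq)
  moreover have "pres_class S R (inv_word u) \<in> carrier ?G"
    using u by (auto simp: presented_group_def)
  ultimately show "\<exists>y\<in>carrier ?G. y \<otimes>\<^bsub>?G\<^esub> x = \<one>\<^bsub>?G\<^esub>" by blast
qed

lemma pres_inv:
  assumes "u \<in> words S"
  shows "inv\<^bsub>presented_group S R\<^esub> (pres_class S R u) = pres_class S R (inv_word u)"
proof -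
  interpret group "presented_group S R" by (rule presented_group_is_group)
  show ?thesis
    using assms pres_mult[of "inv_word u" S u R] pres_eq_inv_left[of u S R]
    by (intro inv_equality) (auto simp: presented_group_def pres_class_eq)
qed


lemma gen_word_append[simp]: "gen_word (xs @ ys) = gen_word xs @ gen_word ys"
  by (simp add: gen_word_def)
lemma gen_word_Cons[simp]: "gen_word (x # ys) = (x, False) # gen_word ys"
  by (simp add: gen_word_def)
lemma gen_word_Nil[simp]: "gen_word [] = []"
  by (simp add: gen_word_def)
lemma gen_word_words[simp]: "gen_word xs \<in> words S \<longleftrightarrow> set xs \<subseteq> S"
  by (auto simp: gen_word_def words_def)

definition GS :: "nat \<Rightarrow> nat set" where "GS m = TW_gens (m+2)"
definition GR :: "nat \<Rightarrow> nat word set" where "GR m = TW_rels (m+2)"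

abbreviation eqG :: "nat \<Rightarrow> nat list \<Rightarrow> nat list \<Rightarrow> bool" where
  "eqG m xs ys \<equiv> pres_eq (GS m) (GR m) (gen_word xs) (gen_word ys)"

lemma GS_iff[simp]: "i \<in> GS m \<longleftrightarrow> 1 \<le> i \<and> i \<le> m + 1"
  by (auto simp: GS_def TW_gens_def)

lemma eqG_refl: "set xs \<subseteq> GS m \<Longrightarrow> eqG m xs xs"
  by (rule pres_eq.refl) simp

lemma eqG_sym: "eqG m xs ys \<Longrightarrow> eqG m ys xs"
  by (rule pres_eq.sym)

lemma eqG_trans: "eqG m xs ys \<Longrightarrow> eqG m ys zs \<Longrightarrow> eqG m xs zs"
  by (rule pres_eq.trans)

lemma eqG_app: "eqG m a b \<Longrightarrow> eqG m c d \<Longrightarrow> eqG m (a @ c) (b @ d)"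
  using pres_eq_app by fastforce

lemma eqG_set: "eqG m a b \<Longrightarrow> set a \<subseteq> GS m \<and> set b \<subseteq> GS m"
  using pres_eq_words by fastforce

lemma eqG_appL: "eqG m a b \<Longrightarrow> set c \<subseteq> GS m \<Longrightarrow> eqG m (c @ a) (c @ b)"
  by (rule eqG_app[OF eqG_refl])

lemma eqG_appR: "eqG m a b \<Longrightarrow> set c \<subseteq> GS m \<Longrightarrow> eqG m (a @ c) (b @ c)"
  by (rule eqG_app[OF _ eqG_refl])

lemma eqG_cancel: "i \<in> GS m \<Longrightarrow> eqG m [i, i] []"
proof -
  assume i: "i \<in> GS m"
  have "gen_word [i, i] \<in> GR m" using i by (auto simp: GR_def TW_rels_def TW_gens_def)
  then have "pres_eq (GS m) (GR m) ([] @ gen_word [i, i] @ []) ([] @ [])"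
    using i by (intro pres_eq.relator) auto
  then show ?thesis by simp
qed

lemma eqG_cancel2: "i \<in> GS m \<Longrightarrow> set a \<subseteq> GS m \<Longrightarrow> set b \<subseteq> GS m
   \<Longrightarrow> eqG m (a @ [i, i] @ b) (a @ b)"
  using eqG_app[OF eqG_refl[of a m] eqG_app[OF eqG_cancel[of i m] eqG_refl[of b m]]] by simp

lemma TW_inv_letter: "i \<in> GS m \<Longrightarrow>
   pres_eq (GS m) (GR m) [(i, True)] [(i, False)]"
proof -
  assume i: "i \<in> GS m"
  have "gen_word [i, i] \<in> GR m" using i by (auto simp: GR_def TW_rels_def TW_gens_def)
  then have 1: "pres_eq (GS m) (GR m) ([(i,True)] @ gen_word [i, i] @ []) ([(i,True)] @ [])"
    using i by (intro pres_eq.relator) auto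
  have 2: "pres_eq (GS m) (GR m) ([] @ [(i,True), (i, \<not> True)] @ [(i,False)]) ([] @ [(i,False)])"
    using i by (intro pres_eq.cancel) auto
  show ?thesis using pres_eq.trans[OF pres_eq.sym[OF 1[simplified]] 2[simplified]] by simp
qed

lemma TW_word_eq_gen: "w \<in> words (GS m) \<Longrightarrow>
   pres_eq (GS m) (GR m) w (gen_word (map fst w))"
proof (induction w)
  case Nil then show ?case by (simp add: pres_eq.refl)
next
  case (Cons x w)
  obtain i e where x: "x = (i, e)" by (cases x)
  have "pres_eq (GS m) (GR m) [(i, e)] [(i, False)]"
    using Cons TW_inv_letter[of i m] by (cases e) (auto simp: x intro: pres_eq.refl)
  then show ?case using pres_eq_app[OF _ Cons.IH, of "[(i,e)]" "[(i,False)]"] Cons by (auto simp: x)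
qed

lemma eqG_comm1: "i \<in> GS m \<Longrightarrow> j \<in> GS m \<Longrightarrow> i + 1 < j \<or> j + 1 < i \<Longrightarrow> eqG m [i, j] [j, i]"
proof -
  assume i: "i \<in> GS m" and j: "j \<in> GS m" and ij: "i + 1 < j \<or> j + 1 < i"
  have "commutator_word i j \<in> GR m" unfolding GR_def TW_rels_def
  proof (rule UnI2)
    have "i \<in> TW_gens (m+2) \<and> j \<in> TW_gens (m+2) \<and> (i + 1 < j \<or> j + 1 < i)"
      using i j ij by (auto simp: TW_gens_def)
    then show "commutator_word i j \<in> {commutator_word i j | i j. i \<in> TW_gens (m+2) \<and> j \<in> TW_gens (m+2) \<and> (i + 1 < j \<or> j + 1 < i)}"
      by blast
  qed
  then have "pres_eq (GS m) (GR m) ([] @ commutator_word i j @ []) ([] @ [])"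
    using i j by (intro pres_eq.relator) (auto simp: commutator_word_def)
  moreover have "pres_eq (GS m) (GR m) (commutator_word i j) (gen_word [i,j,i,j])"
    using TW_word_eq_gen[of "commutator_word i j" m] i j by (auto simp: commutator_word_def)
  ultimately have c: "eqG m [i,j,i,j] []" by (auto intro: pres_eq.sym pres_eq.trans)
  have "eqG m ([i,j,i,j] @ [j,i]) ([] @ [j,i])"
    using eqG_appR[OF c, of "[j,i]"] i j by simp
  moreover have "eqG m ([i,j,i] @ [j,j] @ [i]) ([i,j,i] @ [i])"
    using i j by (intro eqG_cancel2) auto
  moreover have "eqG m ([i,j] @ [i,i] @ []) ([i,j] @ [])"
    using i j by (intro eqG_cancel2) auto
  ultimately show ?thesis by simp (meson pres_eq.sym pres_eq.trans)
qed

definition far :: "nat \<Rightarrow> nat \<Rightarrow> bool" where "far a b \<longleftrightarrow> a + 1 < b \<or> b + 1 < a"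

lemma eqG_comm_lists:
  assumes "set xs \<subseteq> GS m" "set ys \<subseteq> GS m" "\<forall>a\<in>set xs. \<forall>b\<in>set ys. far a b"
  shows "eqG m (xs @ ys) (ys @ xs)"
proof -
  have one: "eqG m (a # ys) (ys @ [a])" if "a \<in> GS m" "set ys \<subseteq> GS m" "\<forall>b\<in>set ys. far a b" for a ys
    using that
  proof (induction ys)
    case Nil then show ?case by (auto intro: pres_eq.refl)
  next
    case (Cons b ys)
    have "eqG m ([a, b] @ ys) ([b, a] @ ys)" using Cons by (intro eqG_appR eqG_comm1) (auto simp: far_def)
    moreover have "eqG m ([b] @ (a # ys)) ([b] @ (ys @ [a]))" using Cons by (intro eqG_appL) auto
    ultimately show ?case by (auto intro: pres_eq.trans)
  qed
  show ?thesis using assms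
  proof (induction xs)
    case Nil then show ?case by (auto intro: pres_eq.refl)
  next
    case (Cons a xs)
    have "eqG m ([a] @ (xs @ ys)) ([a] @ (ys @ xs))" using Cons by (intro eqG_appL) auto
    moreover have "eqG m ((a # ys) @ xs) ((ys @ [a]) @ xs)" using Cons one[of a ys] by (intro eqG_appR) auto
    ultimately show ?case by (auto intro: pres_eq.trans)
  qed
qed

lemma eqG_rev_right: "set xs \<subseteq> GS m \<Longrightarrow> eqG m (xs @ rev xs) []"
proof (induction xs)
  case Nil then show ?case by (auto intro: pres_eq.refl)
next
  case (Cons a xs)
  have "eqG m ([a] @ (xs @ rev xs) @ [a]) ([a] @ [] @ [a])"
    using Cons by (intro eqG_appL eqG_appR) auto
  then show ?case using eqG_cancel[of a m] Cons by (auto intro: pres_eq.trans)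
qed

lemma eqG_rev_left: "set xs \<subseteq> GS m \<Longrightarrow> eqG m (rev xs @ xs) []"
  using eqG_rev_right[of "rev xs" m] by simp

lemma eqG_cancel_mid: "eqG m (a @ xs @ rev xs @ b) (a @ b)" if "set a \<subseteq> GS m" "set b \<subseteq> GS m" "set xs \<subseteq> GS m"
  using eqG_appL[OF eqG_appR[OF eqG_rev_right[of xs m], of b], of a] that by simp

lemma eqG_cancel_mid': "eqG m (a @ rev xs @ xs @ b) (a @ b)" if "set a \<subseteq> GS m" "set b \<subseteq> GS m" "set xs \<subseteq> GS m"
  using eqG_appL[OF eqG_appR[OF eqG_rev_left[of xs m], of b], of a] that by simp


abbreviation eqP :: "nat \<Rightarrow> (nat \<times> nat) word \<Rightarrow> (nat \<times> nat) word \<Rightarrow> bool" where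
  "eqP m x y \<equiv> pres_eq (comm_gens m) (comm_rels m) x y"

lemma comm_gens_iff[simp]: "(p, j) \<in> comm_gens m \<longleftrightarrow> p < j \<and> j \<le> m"
  by (simp add: comm_gens_def)

lemma pres_eq_iff_class: "u \<in> words S \<Longrightarrow> v \<in> words S \<Longrightarrow>
    pres_eq S R u v \<longleftrightarrow> pres_class S R u = pres_class S R v"
  using pres_class_eq pres_class_eqD by metis

lemma pres_class_carrier: "u \<in> words S \<Longrightarrow> pres_class S R u \<in> carrier (presented_group S R)"
  by (simp add: presented_group_def)

lemma pres_class_append: "u \<in> words S \<Longrightarrow> v \<in> words S \<Longrightarrow>
  pres_class S R (u @ v) = pres_class S R u \<otimes>\<^bsub>presented_group S R\<^esub> pres_class S R v"
  by (simp add: pres_mult)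

lemma pres_class_Cons: "fst x \<in> S \<Longrightarrow> v \<in> words S \<Longrightarrow>
  pres_class S R (x # v) = pres_class S R [x] \<otimes>\<^bsub>presented_group S R\<^esub> pres_class S R v"
  using pres_class_append[of "[x]" S v R] by simp

lemma pres_class_inv_letter: "a \<in> S \<Longrightarrow>
  pres_class S R [(a, True)] = inv\<^bsub>presented_group S R\<^esub> (pres_class S R [(a, False)])"
  using pres_inv[of "[(a, False)]" S R] by (simp add: inv_word_def)

lemma pres_class_Nil: "pres_class S R [] = \<one>\<^bsub>presented_group S R\<^esub>"
  by (simp add: presented_group_def)

lemma pres_class_rel: "r \<in> R \<Longrightarrow> r \<in> words S \<Longrightarrow> pres_class S R r = \<one>\<^bsub>presented_group S R\<^esub>"
  using pres_eq.relator[of r R S "[]" "[]"] pres_class_eq[of S R r "[]"] by (simp add: pres_class_Nil)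

lemma (in group) rel2_consequences:
  assumes "A \<in> carrier G" "B \<in> carrier G" "C \<in> carrier G"
    and "B \<otimes> inv A \<otimes> inv C \<otimes> A = \<one>"
  shows "A \<otimes> B = C \<otimes> A" "A \<otimes> inv B = inv C \<otimes> A"
        "inv A \<otimes> C = B \<otimes> inv A" "inv A \<otimes> inv C = inv B \<otimes> inv A"
proof -
  have X: "B \<otimes> (inv A \<otimes> inv C \<otimes> A) = \<one>" using assms by (simp add: m_assoc)
  then have "inv (inv A \<otimes> inv C \<otimes> A) = B" using assms by (intro inv_equality) auto
  then have B: "B = inv A \<otimes> C \<otimes> A"
    using assms by (simp add: inv_mult_group m_assoc)
  show "A \<otimes> B = C \<otimes> A" using assms by (simp add: B m_assoc[symmetric])
  show "A \<otimes> inv B = inv C \<otimes> A" using assms by (simp add: B inv_mult_group m_assoc[symmetric])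
  show "inv A \<otimes> C = B \<otimes> inv A" using assms by (simp add: B m_assoc)
  show "inv A \<otimes> inv C = inv B \<otimes> inv A" using assms by (simp add: B inv_mult_group m_assoc)
qed

lemma (in group) comm_consequences:
  assumes "A \<in> carrier G" "B \<in> carrier G" "A \<otimes> B \<otimes> inv A \<otimes> inv B = \<one>"
  shows "A \<otimes> B = B \<otimes> A" "inv A \<otimes> B = B \<otimes> inv A" "A \<otimes> inv B = inv B \<otimes> A"
        "inv A \<otimes> inv B = inv B \<otimes> inv A"
proof -
  have X: "(A \<otimes> B) \<otimes> (inv A \<otimes> inv B) = \<one>" using assms by (simp add: m_assoc)
  then have "inv (inv A \<otimes> inv B) = A \<otimes> B" using assms by (intro inv_equality) auto
  then have AB: "A \<otimes> B = B \<otimes> A" using assms by (simp add: inv_mult_group)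
  show "A \<otimes> B = B \<otimes> A" by (rule AB)
  have 1: "inv A \<otimes> (A \<otimes> B) \<otimes> inv A = B \<otimes> inv A" using assms by (simp add: m_assoc[symmetric])
  have 2: "inv A \<otimes> (B \<otimes> A) \<otimes> inv A = inv A \<otimes> B" using assms by (simp add: m_assoc)
  show IB: "inv A \<otimes> B = B \<otimes> inv A" using 1 2 AB by simp
  have 3: "inv B \<otimes> (A \<otimes> B) \<otimes> inv B = inv B \<otimes> A" using assms by (simp add: m_assoc)
  have 4: "inv B \<otimes> (B \<otimes> A) \<otimes> inv B = A \<otimes> inv B" using assms by (simp add: m_assoc[symmetric])
  show "A \<otimes> inv B = inv B \<otimes> A" using 3 4 AB by simp
  have "inv (A \<otimes> B) = inv (B \<otimes> A)" by (simp add: AB)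
  then show "inv A \<otimes> inv B = inv B \<otimes> inv A" using assms by (simp add: inv_mult_group)
qed


fun run :: "nat set \<Rightarrow> nat \<Rightarrow> nat" where
  "run T 0 = 0"
| "run T (Suc k) = (if k \<in> T then Suc (run T k) else 0)"

definition flip :: "nat set \<Rightarrow> nat \<Rightarrow> nat set" where
  "flip T i = (if i \<in> T then T - {i} else insert i T)"

lemma flip_mem[simp]: "x \<in> flip T i \<longleftrightarrow> (if x = i then i \<notin> T else x \<in> T)"
  by (auto simp: flip_def)

definition fw :: "nat set \<Rightarrow> nat \<Rightarrow> (nat \<times> nat) word" where
  "fw T i = (if Suc i \<in> T then [((run T i, i), i \<notin> T)] else [])"

fun act :: "nat list \<Rightarrow> nat set \<times> (nat \<times> nat) word \<Rightarrow> nat set \<times> (nat \<times> nat) word" where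
  "act [] pt = pt"
| "act (i # w) pt = (case act w pt of (T, x) \<Rightarrow> (flip T i, fw T i @ x))"

definition blist :: "nat \<Rightarrow> nat \<Rightarrow> nat list" where
  "blist p j = [j - p..<j] @ [j + 1, j, j + 1, j] @ rev [j - p..<j]"

fun Phi :: "(nat \<times> nat) word \<Rightarrow> nat list" where
  "Phi [] = []"
| "Phi (((p, j), e) # x) = (if e then rev (blist p j) else blist p j) @ Phi x"

definition fl :: "nat set \<Rightarrow> nat \<Rightarrow> nat \<Rightarrow> nat list" where
  "fl T a b = filter (\<lambda>k. k \<in> T) (rev [a..<b])"

definition valid :: "nat \<Rightarrow> nat set \<Rightarrow> bool" where
  "valid m T \<longleftrightarrow> T \<subseteq> {1..m+1}"

lemma run_le: "run T k \<le> k"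
  by (induction k) auto

lemma run_lt: "0 \<notin> T \<Longrightarrow> 0 < k \<Longrightarrow> run T k < k"
proof (induction k)
  case 0 then show ?case by simp
next
  case (Suc k) then show ?case by (cases k) auto
qed

lemma run_cong: "(\<And>x. x < k \<Longrightarrow> x \<in> T \<longleftrightarrow> x \<in> T') \<Longrightarrow> run T k = run T' k"
  by (induction k) auto

lemma run_block: "(\<And>x. k - r \<le> x \<Longrightarrow> x < k \<Longrightarrow> x \<in> T) \<Longrightarrow> r \<le> k \<Longrightarrow> (r < k \<Longrightarrow> k - r - 1 \<notin> T)
   \<Longrightarrow> run T k = r"
proof (induction r arbitrary: k)
  case 0 then show ?case by (cases k) auto
next
  case (Suc r)
  then obtain k' where k: "k = Suc k'" by (cases k) auto
  have "k' \<in> T" using Suc.prems k by auto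
  moreover have "run T k' = r" using Suc.prems k by (intro Suc.IH) auto
  ultimately show ?case by (simp add: k)
qed

lemma run_gap: "k < j \<Longrightarrow> k \<notin> T \<Longrightarrow> k \<notin> T' \<Longrightarrow> (\<And>x. k < x \<Longrightarrow> x < j \<Longrightarrow> x \<in> T \<longleftrightarrow> x \<in> T')
   \<Longrightarrow> run T j = run T' j"
proof (induction j)
  case 0 then show ?case by simp
next
  case (Suc j)
  show ?case
  proof (cases "k = j")
    case True then show ?thesis using Suc.prems by simp
  next
    case False then show ?thesis using Suc by auto
  qed
qed

lemma run_nogap: "i < j \<Longrightarrow> (\<And>x. i < x \<Longrightarrow> x < j \<Longrightarrow> x \<in> T)
   \<Longrightarrow> run T j = (j - i - 1) + (if i \<in> T then Suc (run T i) else 0)"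
proof (induction j)
  case 0 then show ?case by simp
next
  case (Suc j)
  show ?case
  proof (cases "i = j")
    case True then show ?thesis by simp
  next
    case False
    then have "i < j" using Suc.prems by simp
    then have "run T j = (j - i - 1) + (if i \<in> T then Suc (run T i) else 0)"
      using Suc by auto
    moreover have "j \<in> T" using Suc.prems \<open>i < j\<close> by auto
    ultimately show ?thesis using \<open>i < j\<close> by simp
  qed
qed

lemma valid_flip: "valid m T \<Longrightarrow> 1 \<le> i \<Longrightarrow> i \<le> m + 1 \<Longrightarrow> valid m (flip T i)"
  by (auto simp: valid_def flip_def)

lemma valid_0: "valid m T \<Longrightarrow> 0 \<notin> T"
  by (auto simp: valid_def)

lemma fw_words: "valid m T \<Longrightarrow> 1 \<le> i \<Longrightarrow> fw T i \<in> words (comm_gens m)"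
proof -
  assume a: "valid m T" "1 \<le> i"
  then have "0 \<notin> T" by (auto simp: valid_def)
  then show ?thesis using a run_lt[of T i] by (auto simp: fw_def valid_def words_def)
qed

lemma act_valid: "valid m T \<Longrightarrow> set w \<subseteq> GS m \<Longrightarrow> x \<in> words (comm_gens m) \<Longrightarrow>
   valid m (fst (act w (T, x))) \<and> snd (act w (T, x)) \<in> words (comm_gens m)"
proof (induction w)
  case Nil then show ?case by simp
next
  case (Cons i w)
  obtain T' x' where tx: "act w (T, x) = (T', x')" by (cases "act w (T, x)")
  then show ?case using Cons fw_words[of m T' i] valid_flip[of m T' i] by auto
qed

lemma act_append: "act (u @ v) pt = act u (act v pt)"
  by (induction u) auto

lemma act_split: "act w (T, x) = (fst (act w (T, [])), snd (act w (T, [])) @ x)"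
proof (induction w)
  case Nil then show ?case by simp
next
  case (Cons i w)
  then show ?case by (auto split: prod.splits)
qed


definition peq :: "nat \<Rightarrow> nat set \<times> (nat \<times> nat) word \<Rightarrow> nat set \<times> (nat \<times> nat) word \<Rightarrow> bool" where
  "peq m pt pt' \<longleftrightarrow> fst pt = fst pt' \<and> eqP m (snd pt) (snd pt')"

lemma peq_sym: "peq m a b \<Longrightarrow> peq m b a"
  by (auto simp: peq_def intro: pres_eq.sym)
lemma peq_trans: "peq m a b \<Longrightarrow> peq m b c \<Longrightarrow> peq m a c"
  by (auto simp: peq_def intro: pres_eq.trans)
lemma peq_refl: "snd a \<in> words (comm_gens m) \<Longrightarrow> peq m a a"
  by (auto simp: peq_def intro: pres_eq.refl)

lemma act_cong: "peq m pt pt' \<Longrightarrow> valid m (fst pt) \<Longrightarrow> set u \<subseteq> GS m \<Longrightarrow> peq m (act u pt) (act u pt')"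
proof -
  assume a: "peq m pt pt'" "valid m (fst pt)" "set u \<subseteq> GS m"
  obtain T x where pt: "pt = (T, x)" by (cases pt)
  obtain x' where pt': "pt' = (T, x')" using a pt by (cases pt') (auto simp: peq_def)
  have e: "eqP m x x'" using a pt pt' by (simp add: peq_def)
  have w: "snd (act u (T, [])) \<in> words (comm_gens m)" using act_valid[of m T u "[]"] a pt by simp
  show ?thesis
    using pres_eq_app_left[OF e w] act_split[of u T x] act_split[of u T x'] pt pt'
    by (simp add: peq_def)
qed

lemma act_aa: "valid m T \<Longrightarrow> i \<in> GS m \<Longrightarrow> x \<in> words (comm_gens m) \<Longrightarrow> peq m (act [i, i] (T, x)) (T, x)"
proof -
  assume a: "valid m T" "i \<in> GS m" "x \<in> words (comm_gens m)"
  have ff: "flip (flip T i) i = T" by (auto simp: flip_def)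
  have r: "run (flip T i) i = run T i" by (rule run_cong) auto
  show ?thesis
  proof (cases "Suc i \<in> T")
    case False
    then show ?thesis using a by (auto simp: fw_def ff peq_def intro: pres_eq.refl)
  next
    case True
    have "x \<in> words (comm_gens m)" by (rule a(3))
    have ws: "fw T i \<in> words (comm_gens m)" using fw_words[of m T i] a by simp
    have "eqP m ([] @ [((run T i, i), i \<in> T), ((run T i, i), \<not> (i \<in> T))] @ x) ([] @ x)"
      using ws a True by (intro pres_eq.cancel) (auto simp: fw_def)
    then show ?thesis using True r by (auto simp: fw_def ff peq_def)
  qed
qed

lemma rel1_mem: "q < i \<Longrightarrow> i + 2 \<le> j \<Longrightarrow> j \<le> m \<Longrightarrow> p + i + 3 \<le> j \<Longrightarrow>
   commutator_word (q, i) (p, j) \<in> comm_rels m"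
proof -
  assume a: "q < i" "i + 2 \<le> j" "j \<le> m" "p + i + 3 \<le> j"
  have "commutator_word (i - (i - q), i) (j - (i + (j - p - i)), j) \<in> comm_rels m"
    unfolding comm_rels_def
  proof (rule UnI1)
    have "1 \<le> i - q \<and> i - q \<le> i \<and> i + 2 \<le> j \<and> j \<le> m \<and> 3 \<le> j - p - i \<and> j - p - i \<le> j - i"
      using a by auto
    then show "commutator_word (i - (i - q), i) (j - (i + (j - p - i)), j) \<in>
      {commutator_word (j - k, j) (t - (j + l), t) | j k t l.
        1 \<le> k \<and> k \<le> j \<and> j + 2 \<le> t \<and> t \<le> m \<and> 3 \<le> l \<and> l \<le> t - j}" by blast
  qed
  moreover have "i - (i - q) = q" "j - (i + (j - p - i)) = p" using a by auto
  ultimately show ?thesis by simp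
qed

lemma rel2_mem: "q < i \<Longrightarrow> i + 2 \<le> j \<Longrightarrow> j \<le> m \<Longrightarrow>
   [((j - i + q, j), False), ((q, i), True), ((j - i - 1, j), True), ((q, i), False)] \<in> comm_rels m"
proof -
  assume a: "q < i" "i + 2 \<le> j" "j \<le> m"
  have "[((j - (i - q), j), False)] @ inv_word [((i - (i - q), i), True), ((j - (i + 1), j), False), ((i - (i - q), i), False)] \<in> comm_rels m"
    unfolding comm_rels_def
  proof (rule UnI2)
    have "1 \<le> i - q \<and> i - q \<le> i \<and> i + 2 \<le> j \<and> j \<le> m" using a by auto
    then show "[((j - (i - q), j), False)] @ inv_word [((i - (i - q), i), True), ((j - (i + 1), j), False), ((i - (i - q), i), False)] \<in>
     {[((t - k, t), False)] @ inv_word [((j - k, j), True), ((t - (j + 1), t), False), ((j - k, j), False)] | j k t.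
        1 \<le> k \<and> k \<le> j \<and> j + 2 \<le> t \<and> t \<le> m}" by blast
  qed
  moreover have "i - (i - q) = q" "j - (i - q) = j - i + q" "j - (i + 1) = j - i - 1" using a by auto
  ultimately show ?thesis by (simp add: inv_word_def)
qed


lemma cls_Cons:
  assumes "fst x \<in> S" "v \<in> words S" "v \<noteq> []"
  shows "pres_class S R (x # v) = (if snd x then inv\<^bsub>presented_group S R\<^esub> (pres_class S R [(fst x, False)])
      else pres_class S R [(fst x, False)]) \<otimes>\<^bsub>presented_group S R\<^esub> pres_class S R v"
proof -
  obtain a e where x: "x = (a, e)" by (cases x)
  show ?thesis using assms pres_class_Cons[of x S v R] pres_class_inv_letter[of a S R]
    by (cases e) (auto simp: x)
qed

lemma cls_True: "a \<in> S \<Longrightarrow> pres_class S R [(a, True)] = inv\<^bsub>presented_group S R\<^esub> (pres_class S R [(a, False)])"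
  by (rule pres_class_inv_letter)

lemma L1:
  assumes "q < i" "i + 2 \<le> j" "j \<le> m" "p + i + 3 \<le> j"
  shows "eqP m [((q, i), e1), ((p, j), e2)] [((p, j), e2), ((q, i), e1)]"
proof -
  let ?G = "presented_group (comm_gens m) (comm_rels m)"
  interpret G: group ?G by (rule presented_group_is_group)
  let ?A = "pres_class (comm_gens m) (comm_rels m) [((q, i), False)]"
  let ?B = "pres_class (comm_gens m) (comm_rels m) [((p, j), False)]"
  have AB: "?A \<in> carrier ?G" "?B \<in> carrier ?G" using assms by (auto intro!: pres_class_carrier)
  have gi: "i < i \<or> True" by simp
  have in1: "(q, i) \<in> comm_gens m" "(p, j) \<in> comm_gens m" using assms by auto
  have "pres_class (comm_gens m) (comm_rels m) (commutator_word (q, i) (p, j)) = \<one>\<^bsub>?G\<^esub>"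
    by (rule pres_class_rel[OF rel1_mem[OF assms]]) (use assms in \<open>simp add: commutator_word_def\<close>)
  then have "?A \<otimes>\<^bsub>?G\<^esub> (?B \<otimes>\<^bsub>?G\<^esub> (inv\<^bsub>?G\<^esub> ?A \<otimes>\<^bsub>?G\<^esub> inv\<^bsub>?G\<^esub> ?B)) = \<one>\<^bsub>?G\<^esub>"
    using in1 by (simp add: commutator_word_def cls_Cons cls_True)
  then have "?A \<otimes>\<^bsub>?G\<^esub> ?B \<otimes>\<^bsub>?G\<^esub> inv\<^bsub>?G\<^esub> ?A \<otimes>\<^bsub>?G\<^esub> inv\<^bsub>?G\<^esub> ?B = \<one>\<^bsub>?G\<^esub>"
    using AB by (simp add: G.m_assoc)
  note c = G.comm_consequences[OF AB this]
  have "pres_class (comm_gens m) (comm_rels m) [((q, i), e1), ((p, j), e2)] =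
        pres_class (comm_gens m) (comm_rels m) [((p, j), e2), ((q, i), e1)]"
    using in1 AB c by (cases e1; cases e2) (simp_all add: cls_Cons cls_True)
  then show ?thesis using in1 by (subst pres_eq_iff_class) auto
qed

lemma L2:
  assumes "q < i" "i + 2 \<le> j" "j \<le> m"
  shows "eqP m [((q, i), False), ((j - i + q, j), e)] [((j - i - 1, j), e), ((q, i), False)]"
        "eqP m [((q, i), True), ((j - i - 1, j), e)] [((j - i + q, j), e), ((q, i), True)]"
proof -
  let ?G = "presented_group (comm_gens m) (comm_rels m)"
  interpret G: group ?G by (rule presented_group_is_group)
  let ?A = "pres_class (comm_gens m) (comm_rels m) [((q, i), False)]"
  let ?B = "pres_class (comm_gens m) (comm_rels m) [((j - i + q, j), False)]"
  let ?C = "pres_class (comm_gens m) (comm_rels m) [((j - i - 1, j), False)]"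
  have in1: "(q, i) \<in> comm_gens m" "(j - i + q, j) \<in> comm_gens m" "(j - i - 1, j) \<in> comm_gens m"
    using assms by auto
  have ABC: "?A \<in> carrier ?G" "?B \<in> carrier ?G" "?C \<in> carrier ?G"
    using in1 by (auto intro!: pres_class_carrier)
  have "pres_class (comm_gens m) (comm_rels m) [((j - i + q, j), False), ((q, i), True), ((j - i - 1, j), True), ((q, i), False)] = \<one>\<^bsub>?G\<^esub>"
    by (rule pres_class_rel[OF rel2_mem[OF assms]]) (use assms in simp)
  then have "?B \<otimes>\<^bsub>?G\<^esub> (inv\<^bsub>?G\<^esub> ?A \<otimes>\<^bsub>?G\<^esub> (inv\<^bsub>?G\<^esub> ?C \<otimes>\<^bsub>?G\<^esub> ?A)) = \<one>\<^bsub>?G\<^esub>"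
    using in1 by (simp add: cls_Cons cls_True del: comm_gens_iff)
  then have "?B \<otimes>\<^bsub>?G\<^esub> inv\<^bsub>?G\<^esub> ?A \<otimes>\<^bsub>?G\<^esub> inv\<^bsub>?G\<^esub> ?C \<otimes>\<^bsub>?G\<^esub> ?A = \<one>\<^bsub>?G\<^esub>"
    using ABC by (simp add: G.m_assoc)
  note c = G.rel2_consequences[OF ABC(1,2,3) this]
  have "pres_class (comm_gens m) (comm_rels m) [((q, i), False), ((j - i + q, j), e)] =
        pres_class (comm_gens m) (comm_rels m) [((j - i - 1, j), e), ((q, i), False)]"
    using in1 ABC c by (cases e) (simp_all add: cls_Cons cls_True del: comm_gens_iff)
  then show "eqP m [((q, i), False), ((j - i + q, j), e)] [((j - i - 1, j), e), ((q, i), False)]"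
    using in1 by (subst pres_eq_iff_class) auto
  have "pres_class (comm_gens m) (comm_rels m) [((q, i), True), ((j - i - 1, j), e)] =
        pres_class (comm_gens m) (comm_rels m) [((j - i + q, j), e), ((q, i), True)]"
    using in1 ABC c by (cases e) (simp_all add: cls_Cons cls_True del: comm_gens_iff)
  then show "eqP m [((q, i), True), ((j - i - 1, j), e)] [((j - i + q, j), e), ((q, i), True)]"
    using in1 by (subst pres_eq_iff_class) auto
qed


lemma run_gap_bound: "k < j \<Longrightarrow> k \<notin> T \<Longrightarrow> run T j + k < j"
proof (induction j)
  case 0 then show ?case by simp
next
  case (Suc j)
  show ?case
  proof (cases "k = j")
    case True then show ?thesis using Suc.prems by simp
  next
    case False then show ?thesis using Suc by auto
  qed
qed

lemma flip_comm: "i \<noteq> j \<Longrightarrow> flip (flip T j) i = flip (flip T i) j"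
  by (auto simp: flip_def)

lemma fw_far_lower: "i + 2 \<le> j \<Longrightarrow> fw (flip T j) i = fw T i"
proof -
  assume a: "i + 2 \<le> j"
  have "run (flip T j) i = run T i" by (rule run_cong) (use a in auto)
  then show ?thesis using a by (auto simp: fw_def)
qed

lemma COMM_core:
  assumes v: "valid m T" and i: "1 \<le> i" and ij: "i + 2 \<le> j" and j: "j \<le> m + 1"
  shows "eqP m (fw T i @ fw T j) (fw (flip T i) j @ fw T i)"
proof -
  have w1: "fw T i \<in> words (comm_gens m)" using fw_words v i by auto
  have w2: "fw T j \<in> words (comm_gens m)" using fw_words v i ij by auto
  have w3: "fw (flip T i) j \<in> words (comm_gens m)" using fw_words valid_flip v i ij j by auto
  have T0: "0 \<notin> T" using v by (rule valid_0)
  let ?q = "run T i"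
  have q: "?q < i" using run_lt[OF T0] i by simp
  have rq: "run (flip T i) i = ?q" by (rule run_cong) auto
  show ?thesis
  proof (cases "Suc i \<in> T")
    case False
    have "run (flip T i) j = run T j"
      by (rule run_gap[of "Suc i"]) (use False ij in auto)
    then have "fw (flip T i) j = fw T j" using ij by (auto simp: fw_def)
    then show ?thesis using False w2 by (auto simp: fw_def intro: pres_eq.refl)
  next
    case si: True
    show ?thesis
    proof (cases "Suc j \<in> T")
      case False
      then have "fw T j = []" "fw (flip T i) j = []" using ij by (auto simp: fw_def)
      then show ?thesis using w1 by (auto intro: pres_eq.refl)
    next
      case sj: True
      have jm: "j \<le> m" using sj v by (auto simp: valid_def)
      show ?thesis
      proof (cases "\<exists>k. i < k \<and> k < j \<and> k \<notin> T")
        case True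
        then obtain k where k: "i < k" "k < j" "k \<notin> T" by blast
        have ki: "i + 2 \<le> k" using k si by (cases "k = Suc i") auto
        have rr: "run (flip T i) j = run T j"
          by (rule run_gap[of k]) (use k in auto)
        have p: "run T j + i + 3 \<le> j" using run_gap_bound[of k j T] k ki by simp
        have "eqP m [((?q, i), i \<notin> T), ((run T j, j), j \<notin> T)] [((run T j, j), j \<notin> T), ((?q, i), i \<notin> T)]"
          by (rule L1[OF q ij jm p])
        then show ?thesis using si sj ij rr by (simp add: fw_def)
      next
        case False
        then have ng: "\<And>x. i < x \<Longrightarrow> x < j \<Longrightarrow> x \<in> T" by blast
        have ng': "\<And>x. i < x \<Longrightarrow> x < j \<Longrightarrow> x \<in> flip T i" using ng by auto
        have r1: "run T j = (j - i - 1) + (if i \<in> T then Suc ?q else 0)"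
          using run_nogap[of i j T] ng ij by simp
        have r2: "run (flip T i) j = (j - i - 1) + (if i \<in> T then 0 else Suc ?q)"
          using run_nogap[of i j "flip T i"] ng' ij rq by simp
        show ?thesis
        proof (cases "i \<in> T")
          case True
          have e: "j - i - 1 + Suc ?q = j - i + ?q" using ij by simp
          show ?thesis using L2(1)[OF q ij jm, of "j \<notin> T"] True si sj ij r1 r2 e by (simp add: fw_def)
        next
          case False
          have e: "j - i - 1 + Suc ?q = j - i + ?q" using ij by simp
          show ?thesis using L2(2)[OF q ij jm, of "j \<notin> T"] False si sj ij r1 r2 e by (simp add: fw_def)
        qed
      qed
    qed
  qed
qed

lemma act_comm_lt:
  assumes v: "valid m T" and i: "1 \<le> i" and ij: "i + 2 \<le> j" and j: "j \<le> m + 1"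
    and x: "x \<in> words (comm_gens m)"
  shows "peq m (act [i, j] (T, x)) (act [j, i] (T, x))"
proof -
  have "eqP m ((fw T i @ fw T j) @ x) ((fw (flip T i) j @ fw T i) @ x)"
    using COMM_core[OF assms(1-4)] x by (rule pres_eq_app_right)
  then show ?thesis using fw_far_lower[OF ij, of T] flip_comm[of i j T] ij
    by (simp add: peq_def)
qed

lemma act_comm:
  assumes v: "valid m T" and i: "i \<in> GS m" and j: "j \<in> GS m" and f: "i + 1 < j \<or> j + 1 < i"
    and x: "x \<in> words (comm_gens m)"
  shows "peq m (act [i, j] (T, x)) (act [j, i] (T, x))"
  using f
proof
  assume "i + 1 < j" then show ?thesis using act_comm_lt[OF v _ _ _ x, of i j] i j by simp
next
  assume "j + 1 < i" then show ?thesis using act_comm_lt[OF v _ _ _ x, of j i] i j by (simp add: peq_sym)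
qed

lemma act_ijij:
  assumes v: "valid m T" and i: "i \<in> GS m" and j: "j \<in> GS m" and f: "i + 1 < j \<or> j + 1 < i"
    and x: "x \<in> words (comm_gens m)"
  shows "peq m (act [i, j, i, j] (T, x)) (T, x)"
proof -
  let ?pt = "act [i, j] (T, x)"
  have vp: "valid m (fst ?pt)" "snd ?pt \<in> words (comm_gens m)"
    using act_valid[OF v _ x, of "[i, j]"] i j by auto
  have pt: "?pt = (fst ?pt, snd ?pt)" by simp
  have 1: "peq m (act [i, j] ?pt) (act [i, j] (act [j, i] (T, x)))"
    by (rule act_cong[OF act_comm[OF v i j f x] vp(1)]) (use i j in simp)
  let ?p1 = "act [i] (T, x)"
  have vp1: "valid m (fst ?p1)" "snd ?p1 \<in> words (comm_gens m)"
    using act_valid[OF v _ x, of "[i]"] i by auto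
  have B: "act [i, j] (act [j, i] (T, x)) = act [i] (act [j, j] ?p1)"
    by (simp only: act_append[symmetric]) simp
  have 2: "peq m (act [i] (act [j, j] ?p1)) (act [i] ?p1)"
  proof (rule act_cong)
    show "peq m (act [j, j] ?p1) ?p1"
      using act_aa[OF vp1(1) j vp1(2)] by simp
    show "valid m (fst (act [j, j] ?p1))"
      using act_valid[OF vp1(1) _ vp1(2), of "[j,j]"] j by simp
  qed (use i in auto)
  have 3: "peq m (act [i, i] (T, x)) (T, x)" by (rule act_aa[OF v i x])
  have A: "act [i, j, i, j] (T, x) = act [i, j] ?pt" by (simp only: act_append[symmetric]) simp
  have C: "act [i] ?p1 = act [i, i] (T, x)" by (simp only: act_append[symmetric]) simp
  show ?thesis unfolding A using peq_trans[OF peq_trans[OF 1[unfolded B] 2[unfolded C]] 3] .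
qed


lemma words_GS: "w \<in> words (GS m) \<Longrightarrow> set (map fst w) \<subseteq> GS m"
  by (auto simp: words_def)

lemma GR_cases: "r \<in> GR m \<Longrightarrow> (\<exists>i. i \<in> GS m \<and> map fst r = [i, i]) \<or>
   (\<exists>i j. i \<in> GS m \<and> j \<in> GS m \<and> (i + 1 < j \<or> j + 1 < i) \<and> map fst r = [i, j, i, j])"
  unfolding GR_def TW_rels_def GS_def by (auto simp: gen_word_def commutator_word_def)

lemma act_inv:
  "pres_eq (GS m) (GR m) w w' \<Longrightarrow> valid m T \<Longrightarrow> x \<in> words (comm_gens m) \<Longrightarrow>
   peq m (act (map fst w) (T, x)) (act (map fst w') (T, x))"
proof (induction arbitrary: T x rule: pres_eq.induct)
  case (refl w)
  then show ?case using act_valid[of m T "map fst w" x] words_GS[of w m]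
    by (intro peq_refl) auto
next
  case (sym u v) then show ?case by (blast intro: peq_sym)
next
  case (trans u v w) then show ?case by (blast intro: peq_trans)
next
  case (cancel a u v e)
  let ?pt = "act (map fst v) (T, x)"
  have vp: "valid m (fst ?pt)" "snd ?pt \<in> words (comm_gens m)"
    using act_valid[of m T "map fst v" x] cancel words_GS[of v m] by auto
  have pt: "?pt = (fst ?pt, snd ?pt)" by simp
  have "peq m (act [a, a] ?pt) ?pt" using act_aa[OF vp(1) cancel(1) vp(2)] by simp
  moreover have "valid m (fst (act [a, a] ?pt))"
    using act_valid[OF vp(1) _ vp(2), of "[a, a]"] cancel(1) by simp
  ultimately have "peq m (act (map fst u) (act [a, a] ?pt)) (act (map fst u) ?pt)"
    using cancel words_GS[of u m] by (intro act_cong) auto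
  then show ?case by (simp only: map_append act_append) simp
next
  case (relator r u v)
  let ?pt = "act (map fst v) (T, x)"
  have vp: "valid m (fst ?pt)" "snd ?pt \<in> words (comm_gens m)"
    using act_valid[of m T "map fst v" x] relator words_GS[of v m] by auto
  have "peq m (act (map fst r) ?pt) ?pt"
    using GR_cases[OF relator(1)]
  proof
    assume "\<exists>i. i \<in> GS m \<and> map fst r = [i, i]"
    then obtain i where "i \<in> GS m" "map fst r = [i, i]" by (elim exE conjE)
    then show ?thesis using act_aa[OF vp(1) _ vp(2), of i] by simp
  next
    assume "\<exists>i j. i \<in> GS m \<and> j \<in> GS m \<and> (i + 1 < j \<or> j + 1 < i) \<and> map fst r = [i, j, i, j]"
    then obtain i j where "i \<in> GS m" "j \<in> GS m" "i + 1 < j \<or> j + 1 < i" "map fst r = [i, j, i, j]" by (elim exE conjE)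
    then show ?thesis using act_ijij[OF vp(1) _ _ _ vp(2), of i j] by simp
  qed
  moreover have "valid m (fst (act (map fst r) ?pt))"
    using act_valid[OF vp(1) _ vp(2), of "map fst r"] relator words_GS[of r m] by simp
  ultimately have "peq m (act (map fst u) (act (map fst r) ?pt)) (act (map fst u) ?pt)"
    using relator words_GS[of u m] by (intro act_cong) auto
  then show ?case by (simp only: map_append act_append)
qed


definition eqL :: "nat \<Rightarrow> nat list \<Rightarrow> nat list \<Rightarrow> bool" where
  "eqL m xs ys \<longleftrightarrow> eqG m xs ys"

lemma eqL_refl: "set xs \<subseteq> GS m \<Longrightarrow> eqL m xs xs"
  unfolding eqL_def by (rule eqG_refl)
lemma eqL_sym: "eqL m xs ys \<Longrightarrow> eqL m ys xs"
  unfolding eqL_def by (rule eqG_sym)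
lemma eqL_trans: "eqL m xs ys \<Longrightarrow> eqL m ys zs \<Longrightarrow> eqL m xs zs"
  unfolding eqL_def by (rule eqG_trans)
lemma eqL_app: "eqL m a b \<Longrightarrow> eqL m c d \<Longrightarrow> eqL m (a @ c) (b @ d)"
  unfolding eqL_def by (rule eqG_app)
lemma eqL_set: "eqL m a b \<Longrightarrow> set a \<subseteq> GS m \<and> set b \<subseteq> GS m"
  unfolding eqL_def by (rule eqG_set)
lemma eqL_appL: "eqL m a b \<Longrightarrow> set c \<subseteq> GS m \<Longrightarrow> eqL m (c @ a) (c @ b)"
  by (rule eqL_app[OF eqL_refl])
lemma eqL_appR: "eqL m a b \<Longrightarrow> set c \<subseteq> GS m \<Longrightarrow> eqL m (a @ c) (b @ c)"
  by (rule eqL_app[OF _ eqL_refl])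
lemma eqL_ctx: "eqL m a b \<Longrightarrow> set c \<subseteq> GS m \<Longrightarrow> set d \<subseteq> GS m \<Longrightarrow> eqL m (c @ a @ d) (c @ b @ d)"
  by (rule eqL_appL[OF eqL_appR])
lemma eqL_cancel: "i \<in> GS m \<Longrightarrow> eqL m [i, i] []"
  unfolding eqL_def by (rule eqG_cancel)
lemma eqL_comm_lists: "set xs \<subseteq> GS m \<Longrightarrow> set ys \<subseteq> GS m \<Longrightarrow> \<forall>a\<in>set xs. \<forall>b\<in>set ys. far a b
   \<Longrightarrow> eqL m (xs @ ys) (ys @ xs)"
  unfolding eqL_def by (rule eqG_comm_lists)
lemma eqL_rev_right: "set xs \<subseteq> GS m \<Longrightarrow> eqL m (xs @ rev xs) []"
  unfolding eqL_def by (rule eqG_rev_right)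
lemma eqL_rev_left: "set xs \<subseteq> GS m \<Longrightarrow> eqL m (rev xs @ xs) []"
  unfolding eqL_def by (rule eqG_rev_left)

lemma eqL_cancel_ctx: "i \<in> GS m \<Longrightarrow> set c \<subseteq> GS m \<Longrightarrow> set d \<subseteq> GS m \<Longrightarrow> eqL m (c @ [i, i] @ d) (c @ d)"
  using eqL_ctx[OF eqL_cancel[of i m], of c d] by simp

lemma eqL_rev_ctx: "set xs \<subseteq> GS m \<Longrightarrow> set c \<subseteq> GS m \<Longrightarrow> set d \<subseteq> GS m \<Longrightarrow> eqL m (c @ xs @ rev xs @ d) (c @ d)"
  using eqL_ctx[OF eqL_rev_right[of xs m], of c d] by simp

lemma eqL_rev_ctx': "set xs \<subseteq> GS m \<Longrightarrow> set c \<subseteq> GS m \<Longrightarrow> set d \<subseteq> GS m \<Longrightarrow> eqL m (c @ rev xs @ xs @ d) (c @ d)"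
  using eqL_ctx[OF eqL_rev_left[of xs m], of c d] by simp

lemma fl_set: "set (fl T a b) \<subseteq> {x. a \<le> x \<and> x < b \<and> x \<in> T}"
  by (auto simp: fl_def)

lemma fl_Suc: "fl T a (Suc k) = (if a \<le> k \<and> k \<in> T then [k] else []) @ fl T a k"
  by (auto simp: fl_def)

lemma fl_empty: "b \<le> a \<Longrightarrow> fl T a b = []"
  by (auto simp: fl_def)

lemma fl_split: "a \<le> i \<Longrightarrow> i < b \<Longrightarrow> fl T a b = fl T (Suc i) b @ (if i \<in> T then [i] else []) @ fl T a i"
proof -
  assume a: "a \<le> i" "i < b"
  have "[a..<b] = [a..<i] @ [i] @ [Suc i..<b]"
  proof -
    have "[a..<b] = [a..<i] @ [i..<i + (b - i)]" using a upt_add_eq_append[of a i "b - i"] by simp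
    also have "[i..<i + (b - i)] = i # [Suc i..<b]" using a by (simp add: upt_conv_Cons)
    finally show ?thesis by simp
  qed
  then show ?thesis by (simp add: fl_def)
qed

lemma fl_cong: "(\<And>x. a \<le> x \<Longrightarrow> x < b \<Longrightarrow> x \<in> T \<longleftrightarrow> x \<in> T') \<Longrightarrow> fl T a b = fl T' a b"
  unfolding fl_def by (rule filter_cong) auto


lemma set_blist: "set (blist p j) = {j - p..<j} \<union> {j, j + 1}"
  by (auto simp: blist_def)

lemma blist_GS: "p < j \<Longrightarrow> j \<le> m \<Longrightarrow> set (blist p j) \<subseteq> GS m"
  by (auto simp: set_blist)

lemma Phi_append: "Phi (x @ y) = Phi x @ Phi y"
  by (induction x rule: Phi.induct) auto

lemma Phi_GS: "x \<in> words (comm_gens m) \<Longrightarrow> set (Phi x) \<subseteq> GS m"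
proof (induction x rule: Phi.induct)
  case 1 then show ?case by simp
next
  case (2 p j e x) then show ?case using blist_GS[of p j m] by auto
qed

lemma blist_Suc: "Suc q \<le> i \<Longrightarrow> blist (Suc q) i = [i - Suc q] @ blist q i @ [i - Suc q]"
proof -
  assume a: "Suc q \<le> i"
  have "[i - Suc q..<i] = (i - Suc q) # [i - q..<i]"
    using a by (simp add: upt_conv_Cons Suc_diff_Suc)
  then show ?thesis by (simp add: blist_def)
qed

lemma lemB_aux: "0 \<notin> T \<Longrightarrow> i \<le> m \<Longrightarrow> \<forall>q. q < i \<longrightarrow> k = i - q \<longrightarrow>
   eqL m (blist q i @ fl T 1 k) (fl T 1 k @ blist (q + run T k) i)"
proof (induction k)
  case 0 then show ?case by auto
next
  case (Suc k)
  show ?case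
  proof (intro allI impI)
    fix q assume q: "q < i" "Suc k = i - q"
    have bG: "set (blist q i) \<subseteq> GS m" using blist_GS[of q i m] q Suc.prems by simp
    have flG: "set (fl T 1 k) \<subseteq> GS m" using fl_set[of T 1 k] q Suc.prems by auto
    show "eqL m (blist q i @ fl T 1 (Suc k)) (fl T 1 (Suc k) @ blist (q + run T (Suc k)) i)"
    proof (cases "k \<in> T")
      case True
      then have k1: "1 \<le> k" using Suc.prems by (cases k) auto
      have kG: "k \<in> GS m" using k1 q Suc.prems by simp
      have flS: "fl T 1 (Suc k) = [k] @ fl T 1 k" using True k1 by (simp add: fl_Suc)
      have rS: "run T (Suc k) = Suc (run T k)" using True by simp
      have bS: "blist (Suc q) i = [k] @ blist q i @ [k]"
        using blist_Suc[of q i] q by simp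
      have bSG: "set (blist (Suc q) i) \<subseteq> GS m" using blist_GS[of "Suc q" i m] q k1 Suc.prems by simp
      have 1: "eqL m (blist q i @ [k] @ fl T 1 k) ([k] @ blist (Suc q) i @ fl T 1 k)"
        using eqL_cancel_ctx[of k m "[]" "blist q i @ [k] @ fl T 1 k"] kG bG flG bS
        by (auto simp: intro: eqL_sym)
      have IH: "eqL m (blist (Suc q) i @ fl T 1 k) (fl T 1 k @ blist (Suc q + run T k) i)"
      proof -
        have "Suc q < i" "k = i - Suc q" using q k1 by auto
        then show ?thesis using spec[OF Suc.IH[OF Suc.prems], of "Suc q"] by simp
      qed
      have 2: "eqL m ([k] @ blist (Suc q) i @ fl T 1 k) ([k] @ fl T 1 k @ blist (Suc q + run T k) i)"
        using eqL_appL[OF IH, of "[k]"] kG by simp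
      show ?thesis using eqL_trans[OF 1 2] flS rS by simp
    next
      case False
      have flS: "fl T 1 (Suc k) = fl T 1 k" using False by (simp add: fl_Suc)
      have rS: "run T (Suc k) = 0" using False by simp
      have far: "\<forall>a\<in>set (blist q i). \<forall>b\<in>set (fl T 1 k). far a b"
        using fl_set[of T 1 k] q by (auto simp: set_blist far_def)
      show ?thesis using eqL_comm_lists[OF bG flG far] flS rS by simp
    qed
  qed
qed

lemma lemB: "0 \<notin> T \<Longrightarrow> i \<le> m \<Longrightarrow> q < i \<Longrightarrow>
   eqL m (blist q i @ fl T 1 (i - q)) (fl T 1 (i - q) @ blist (q + run T (i - q)) i)"
  using lemB_aux by blast


definition sw :: "nat \<Rightarrow> nat set \<Rightarrow> nat list" where
  "sw m T = fl T 1 (m + 2)"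

lemma sw_GS: "set (sw m T) \<subseteq> GS m"
  using fl_set[of T 1 "m+2"] by (auto simp: sw_def)

lemma R1_in:
  assumes v: "valid m T" and iT: "i \<in> T"
  shows "eqL m (i # sw m T) (sw m (flip T i) @ Phi (fw T i))"
proof -
  have i1: "1 \<le> i" "i \<le> m + 1" using v iT by (auto simp: valid_def)
  have iG: "i \<in> GS m" using i1 by simp
  let ?U = "fl T (Suc i) (m + 2)"
  let ?L = "fl T 1 i"
  have UG: "set ?U \<subseteq> GS m" using fl_set[of T "Suc i" "m+2"] by auto
  have LG: "set ?L \<subseteq> GS m" using fl_set[of T 1 i] i1 by auto
  have swT: "sw m T = ?U @ [i] @ ?L" using fl_split[of 1 i "m+2" T] i1 iT by (simp add: sw_def)
  have swF: "sw m (flip T i) = ?U @ ?L"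
  proof -
    have "sw m (flip T i) = fl (flip T i) (Suc i) (m + 2) @ fl (flip T i) 1 i"
      using fl_split[of 1 i "m+2" "flip T i"] i1 iT by (simp add: sw_def)
    moreover have "fl (flip T i) (Suc i) (m + 2) = ?U" by (rule fl_cong) auto
    moreover have "fl (flip T i) 1 i = ?L" by (rule fl_cong) auto
    ultimately show ?thesis by simp
  qed
  show ?thesis
  proof (cases "Suc i \<in> T")
    case False
    have "Suc i < b" if "b \<in> set ?U" for b
    proof -
      have "Suc i \<le> b" "b \<in> T" using fl_set[of T "Suc i" "m+2"] that by auto
      then show ?thesis using False by (cases "b = Suc i") auto
    qed
    then have far: "\<forall>a\<in>set [i]. \<forall>b\<in>set ?U. far a b" by (auto simp: far_def)
    have 1: "eqL m ([i] @ ?U @ [i] @ ?L) (?U @ [i] @ [i] @ ?L)"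
      using eqL_appR[OF eqL_comm_lists[OF _ UG far], of "[i] @ ?L"] iG LG by simp
    have 2: "eqL m (?U @ [i, i] @ ?L) (?U @ ?L)" by (rule eqL_cancel_ctx[OF iG UG LG])
    show ?thesis using eqL_trans[OF 1] 2 swT swF False by (simp add: fw_def)
  next
    case True
    have im: "i \<le> m" using True v by (auto simp: valid_def)
    let ?U2 = "fl T (Suc (Suc i)) (m + 2)"
    have U: "?U = ?U2 @ [Suc i]"
      using fl_split[of "Suc i" "Suc i" "m+2" T] True im fl_empty[of "Suc i" "Suc i" T] by simp
    have U2G: "set ?U2 \<subseteq> GS m" using fl_set[of T "Suc (Suc i)" "m+2"] by auto
    have siG: "Suc i \<in> GS m" using im by simp
    have far: "\<forall>a\<in>set [i]. \<forall>b\<in>set ?U2. far a b"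
      using fl_set[of T "Suc (Suc i)" "m+2"] by (auto simp: far_def)
    have 1: "eqL m ([i] @ ?U2 @ [Suc i, i] @ ?L) (?U2 @ [i, Suc i, i] @ ?L)"
      using eqL_appR[OF eqL_comm_lists[OF _ U2G far], of "[Suc i, i] @ ?L"] iG LG siG by simp
    have b0: "blist 0 i = [Suc i, i, Suc i, i]" by (simp add: blist_def)
    have 2: "eqL m (?U2 @ [i, Suc i, i] @ ?L) (?U2 @ [Suc i] @ blist 0 i @ ?L)"
      using eqL_sym[OF eqL_cancel_ctx[OF siG, of ?U2 "[i, Suc i, i] @ ?L"]] U2G LG iG siG b0 by simp
    have 3: "eqL m (?U2 @ [Suc i] @ blist 0 i @ ?L) (?U2 @ [Suc i] @ ?L @ blist (run T i) i)"
      using eqL_appL[OF lemB[OF valid_0[OF v] im, of 0], of "?U2 @ [Suc i]"] i1 U2G siG by simp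
    have fw: "Phi (fw T i) = blist (run T i) i" using True iT by (simp add: fw_def)
    show ?thesis using eqL_trans[OF eqL_trans[OF 1 2] 3] swT swF U fw by simp
  qed
qed

lemma R1:
  assumes v: "valid m T" and iG: "i \<in> GS m"
  shows "eqL m (i # sw m T) (sw m (flip T i) @ Phi (fw T i))"
proof (cases "i \<in> T")
  case True then show ?thesis using R1_in[OF v True] by simp
next
  case False
  let ?T' = "insert i T"
  have v': "valid m ?T'" using v iG by (auto simp: valid_def)
  have ff: "flip ?T' i = T" "flip T i = ?T'" using False by (auto simp: flip_def)
  have r: "run ?T' i = run T i" by (rule run_cong) auto
  let ?b = "Phi (fw ?T' i)"
  have fwT: "Phi (fw T i) = rev ?b" using False r by (auto simp: fw_def)
  have bG: "set ?b \<subseteq> GS m" using Phi_GS[OF fw_words[OF v'], of i] iG by simp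
  have 1: "eqL m (i # sw m ?T') (sw m T @ ?b)" using R1_in[OF v', of i] ff by simp
  have 2: "eqL m ([i] @ [i] @ sw m ?T') ([i] @ sw m T @ ?b)"
    using eqL_appL[OF 1, of "[i]"] iG by simp
  have 3: "eqL m (sw m ?T') ([i] @ sw m T @ ?b)"
  proof -
    have "eqL m ([] @ [i, i] @ sw m ?T') ([] @ sw m ?T')"
      by (rule eqL_cancel_ctx[OF iG]) (use sw_GS in auto)
    then have "eqL m (sw m ?T') ([i] @ [i] @ sw m ?T')" by (simp add: eqL_sym)
    then show ?thesis using eqL_trans 2 by blast
  qed
  have 4: "eqL m (sw m ?T' @ rev ?b) ([i] @ sw m T @ ?b @ rev ?b)"
    using eqL_appR[OF 3, of "rev ?b"] bG by simp
  have 5: "eqL m (([i] @ sw m T) @ ?b @ rev ?b @ []) (([i] @ sw m T) @ [])"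
    by (rule eqL_rev_ctx[OF bG]) (use iG sw_GS in auto)
  show ?thesis using eqL_sym[OF eqL_trans[OF 4]] 5 ff fwT by simp
qed

lemma K3:
  assumes v: "valid m T" and w: "set w \<subseteq> GS m" and x: "x \<in> words (comm_gens m)"
  shows "eqL m (w @ sw m T @ Phi x) (sw m (fst (act w (T, x))) @ Phi (snd (act w (T, x))))"
  using w
proof (induction w)
  case Nil show ?case by simp (rule eqL_refl, use sw_GS Phi_GS[OF x] in auto)
next
  case (Cons i w)
  obtain T1 x1 where a: "act w (T, x) = (T1, x1)" by (cases "act w (T, x)")
  have vx: "valid m T1" "x1 \<in> words (comm_gens m)" using act_valid[OF v _ x, of w] Cons a by auto
  have iG: "i \<in> GS m" using Cons by simp
  have IH: "eqL m (w @ sw m T @ Phi x) (sw m T1 @ Phi x1)" using Cons a by simp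
  have 1: "eqL m ([i] @ w @ sw m T @ Phi x) ([i] @ sw m T1 @ Phi x1)"
    using eqL_appL[OF IH, of "[i]"] iG by simp
  have 2: "eqL m ((i # sw m T1) @ Phi x1) ((sw m (flip T1 i) @ Phi (fw T1 i)) @ Phi x1)"
    using eqL_appR[OF R1[OF vx(1) iG]] Phi_GS[OF vx(2)] by simp
  show ?case using eqL_trans[OF 1] 2 a by (simp add: Phi_append)
qed


lemma act_up: "1 \<le> a \<Longrightarrow> act (rev [a..<b]) ({}, z) = ({a..<b}, z)"
proof (induction b)
  case 0 then show ?case by simp
next
  case (Suc b)
  show ?case
  proof (cases "a \<le> b")
    case False then show ?thesis by simp
  next
    case True
    have "flip {a..<b} b = {a..<Suc b}" using True by (auto simp: flip_def)
    moreover have "fw {a..<b} b = []" by (simp add: fw_def)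
    ultimately show ?thesis using Suc True by simp
  qed
qed

lemma act_down: "act [a..<b] ({a..<b}, z) = ({}, z)"
proof (induction b)
  case 0 then show ?case by simp
next
  case (Suc b)
  show ?case
  proof (cases "a \<le> b")
    case False then show ?thesis by simp
  next
    case True
    have "act [b] ({a..<Suc b}, z) = ({a..<b}, z)"
      using True by (auto simp: flip_def fw_def)
    then show ?thesis using Suc True by (simp add: act_append)
  qed
qed

lemma act_mid:
  assumes "p < j"
  shows "act [j + 1, j, j + 1, j] ({j - p..<j}, z) = ({j - p..<j}, [((p, j), False)] @ z)"
proof -
  let ?B = "{j - p..<j}"
  have s1: "flip ?B j = {j - p..<Suc j}" by (auto simp: flip_def)
  have s2: "flip {j - p..<Suc j} (Suc j) = {j - p..<Suc (Suc j)}" by (auto simp: flip_def)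
  have s3: "flip {j - p..<Suc (Suc j)} j = insert (Suc j) ?B" by (auto simp: flip_def)
  have s4: "flip (insert (Suc j) ?B) (Suc j) = ?B" by (auto simp: flip_def)
  have r: "run {j - p..<Suc (Suc j)} j = p"
    by (rule run_block) (use assms in auto)
  show ?thesis using s1 s2 s3 s4 r by (simp add: fw_def)
qed

lemma act_mid_rev:
  assumes "p < j"
  shows "act [j, j + 1, j, j + 1] ({j - p..<j}, z) = ({j - p..<j}, [((p, j), True)] @ z)"
proof -
  let ?B = "{j - p..<j}"
  have s1: "flip ?B (Suc j) = insert (Suc j) ?B" by (auto simp: flip_def)
  have s2: "flip (insert (Suc j) ?B) j = {j - p..<Suc (Suc j)}" by (auto simp: flip_def)
  have s3: "flip {j - p..<Suc (Suc j)} (Suc j) = {j - p..<Suc j}" by (auto simp: flip_def)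
  have s4: "flip {j - p..<Suc j} j = ?B" by (auto simp: flip_def)
  have r: "run (insert (Suc j) ?B) j = p"
    by (rule run_block) (use assms in auto)
  show ?thesis using s1 s2 s3 s4 r by (simp add: fw_def)
qed

lemma act_blist: "p < j \<Longrightarrow> act (blist p j) ({}, z) = ({}, [((p, j), False)] @ z)"
  unfolding blist_def act_append
  using act_up[of "j - p" j z] act_mid[of p j z] act_down[of "j - p" j] by simp

lemma act_blist_rev: "p < j \<Longrightarrow> act (rev (blist p j)) ({}, z) = ({}, [((p, j), True)] @ z)"
  unfolding blist_def
  using act_up[of "j - p" j z] act_mid_rev[of p j z] act_down[of "j - p" j] by (simp add: act_append)

lemma K2: "x \<in> words (comm_gens m) \<Longrightarrow> act (Phi x) ({}, y) = ({}, x @ y)"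
proof (induction x rule: Phi.induct)
  case 1 then show ?case by simp
next
  case (2 p j e x)
  then show ?case using act_blist[of p j] act_blist_rev[of p j] by (auto simp: act_append)
qed


lemma C2:
  assumes v: "valid m T" and i: "i \<in> GS m" and j: "j \<in> GS m" and ij: "i + 2 \<le> j"
  shows "eqL m (Phi (fw (flip T j) i @ fw T j)) (Phi (fw (flip T i) j @ fw T i))"
proof -
  have vj: "valid m (flip T j)" and vi: "valid m (flip T i)" using valid_flip v i j by auto
  let ?X = "flip (flip T j) i"
  have X: "flip (flip T i) j = ?X" using flip_comm[of i j T] ij by simp
  have fwG: "set (Phi (fw S k)) \<subseteq> GS m" if "valid m S" "k \<in> GS m" for S k
    using Phi_GS[OF fw_words[OF that(1)]] that(2) by simp
  have 1: "eqL m ([i] @ [j] @ sw m T) ([i] @ sw m (flip T j) @ Phi (fw T j))"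
    using eqL_appL[OF R1[OF v j], of "[i]"] i by simp
  have 2: "eqL m ((i # sw m (flip T j)) @ Phi (fw T j)) ((sw m ?X @ Phi (fw (flip T j) i)) @ Phi (fw T j))"
    using eqL_appR[OF R1[OF vj i]] fwG[OF v j] by simp
  have 3: "eqL m ([j] @ [i] @ sw m T) ([j] @ sw m (flip T i) @ Phi (fw T i))"
    using eqL_appL[OF R1[OF v i], of "[j]"] j by simp
  have 4: "eqL m ((j # sw m (flip T i)) @ Phi (fw T i)) ((sw m ?X @ Phi (fw (flip T i) j)) @ Phi (fw T i))"
    using eqL_appR[OF R1[OF vi j]] fwG[OF v i] X by simp
  have 5: "eqL m ([i, j] @ sw m T) ([j, i] @ sw m T)"
    by (rule eqL_appR[OF eqL_comm_lists[of "[i]" m "[j]", simplified]]) (use i j ij sw_GS in \<open>auto simp: far_def\<close>)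
  have 6: "eqL m (sw m ?X @ Phi (fw (flip T j) i) @ Phi (fw T j)) (sw m ?X @ Phi (fw (flip T i) j) @ Phi (fw T i))"
  proof -
    have a: "eqL m ([i, j] @ sw m T) (sw m ?X @ Phi (fw (flip T j) i) @ Phi (fw T j))"
      using eqL_trans[OF 1] 2 by simp
    have b: "eqL m ([j, i] @ sw m T) (sw m ?X @ Phi (fw (flip T i) j) @ Phi (fw T i))"
      using eqL_trans[OF 3] 4 by simp
    show ?thesis using eqL_trans[OF eqL_sym[OF a] eqL_trans[OF 5 b]] .
  qed
  have 7: "eqL m (rev (sw m ?X) @ sw m ?X @ Phi (fw (flip T j) i) @ Phi (fw T j))
                 (rev (sw m ?X) @ sw m ?X @ Phi (fw (flip T i) j) @ Phi (fw T i))"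
    using eqL_appL[OF 6, of "rev (sw m ?X)"] sw_GS by simp
  have 8: "eqL m ([] @ rev (sw m ?X) @ sw m ?X @ P) ([] @ P)" if "set P \<subseteq> GS m" for P
    by (rule eqL_rev_ctx') (use that sw_GS in auto)
  have G1: "set (Phi (fw (flip T j) i) @ Phi (fw T j)) \<subseteq> GS m" using fwG vj i v j by simp
  have G2: "set (Phi (fw (flip T i) j) @ Phi (fw T i)) \<subseteq> GS m" using fwG vi i v j by simp
  show ?thesis
    using eqL_trans[OF eqL_sym[OF 8[OF G1]] eqL_trans[OF _ 8[OF G2]]] 7 by (simp add: Phi_append)
qed

lemma G_rel1:
  assumes "q < i" "i + 2 \<le> j" "j \<le> m" "p + i + 3 \<le> j"
  shows "eqL m (blist q i @ blist p j) (blist p j @ blist q i)"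
proof -
  let ?T = "{i - q..<i + 2} \<union> {j - p..<j + 2}"
  have v: "valid m ?T" using assms by (auto simp: valid_def)
  have iG: "i \<in> GS m" "j \<in> GS m" using assms by auto
  have r1: "run (flip ?T j) i = q" by (rule run_block) (use assms in auto)
  have r2: "run ?T j = p" by (rule run_block) (use assms in auto)
  have r3: "run (flip ?T i) j = p" by (rule run_block) (use assms in auto)
  have r4: "run ?T i = q" by (rule run_block) (use assms in auto)
  have "Suc i \<in> ?T" "Suc j \<in> ?T" "i \<in> ?T" "j \<in> ?T" using assms by auto
  then show ?thesis using C2[OF v iG assms(2)] r1 r2 r3 r4 assms by (simp add: fw_def)
qed

lemma G_rel2:
  assumes "q < i" "i + 2 \<le> j" "j \<le> m"
  shows "eqL m (blist q i @ blist (j - i + q) j) (blist (j - i - 1) j @ blist q i)"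
proof -
  let ?T = "{i - q..<j + 2}"
  have v: "valid m ?T" using assms by (auto simp: valid_def)
  have iG: "i \<in> GS m" "j \<in> GS m" using assms by auto
  have r1: "run (flip ?T j) i = q" by (rule run_block) (use assms in auto)
  have r2: "run ?T j = j - i + q" by (rule run_block) (use assms in auto)
  have r3: "run (flip ?T i) j = j - i - 1" by (rule run_block) (use assms in auto)
  have r4: "run ?T i = q" by (rule run_block) (use assms in auto)
  have "Suc i \<in> ?T" "Suc j \<in> ?T" "i \<in> ?T" "j \<in> ?T" using assms by auto
  then show ?thesis using C2[OF v iG assms(2)] r1 r2 r3 r4 assms by (simp add: fw_def)
qed


lemma comm_rel_G:
  assumes "set a \<subseteq> GS m" "set b \<subseteq> GS m" "eqL m (a @ b) (b @ a)"
  shows "eqL m (a @ b @ rev a @ rev b) []"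
proof -
  have 1: "eqL m ((a @ b) @ rev a @ rev b) ((b @ a) @ rev a @ rev b)"
    using eqL_appR[OF assms(3)] assms by simp
  have 2: "eqL m (b @ a @ rev a @ rev b) (b @ rev b)"
    using eqL_rev_ctx[of a m b "rev b"] assms by simp
  have 3: "eqL m (b @ rev b) []" using eqL_rev_right assms by simp
  show ?thesis using eqL_trans[OF eqL_trans[OF 1[simplified] 2] 3] .
qed

lemma conj_rel_G:
  assumes "set a \<subseteq> GS m" "set b \<subseteq> GS m" "set c \<subseteq> GS m" "eqL m (a @ b) (c @ a)"
  shows "eqL m (b @ rev a @ rev c @ a) []"
proof -
  let ?t = "rev a @ rev c @ a"
  have 1: "eqL m (b @ ?t) (rev a @ a @ b @ ?t)"
    using eqL_sym[OF eqL_rev_ctx'[of a m "[]" "b @ ?t"]] assms by simp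
  have 2: "eqL m (rev a @ (a @ b) @ ?t) (rev a @ (c @ a) @ ?t)"
    using eqL_ctx[OF assms(4), of "rev a" ?t] assms by simp
  have 3: "eqL m ((rev a @ c) @ a @ rev a @ (rev c @ a)) ((rev a @ c) @ rev c @ a)"
    using eqL_rev_ctx[of a m "rev a @ c" "rev c @ a"] assms by simp
  have 4: "eqL m (rev a @ c @ rev c @ a) (rev a @ a)"
    using eqL_rev_ctx[of c m "rev a" a] assms by simp
  have 5: "eqL m (rev a @ a) []" using eqL_rev_left assms by simp
  show ?thesis using eqL_trans[OF eqL_trans[OF eqL_trans[OF eqL_trans[OF 1 2[simplified]] 3[simplified]] 4] 5] .
qed

lemma comm_rels_cases:
  assumes "r \<in> comm_rels m"
  shows "(\<exists>q i p j. q < i \<and> i + 2 \<le> j \<and> j \<le> m \<and> p + i + 3 \<le> j \<and> r = commutator_word (q, i) (p, j)) \<or>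
         (\<exists>q i j. q < i \<and> i + 2 \<le> j \<and> j \<le> m \<and>
            r = [((j - i + q, j), False), ((q, i), True), ((j - i - 1, j), True), ((q, i), False)])"
  using assms unfolding comm_rels_def
proof (elim UnE)
  assume "r \<in> {commutator_word (j - k, j) (t - (j + l), t) | j k t l.
        1 \<le> k \<and> k \<le> j \<and> j + 2 \<le> t \<and> t \<le> m \<and> 3 \<le> l \<and> l \<le> t - j}"
  then have "\<exists>i k t l. r = commutator_word (i - k, i) (t - (i + l), t) \<and>
    1 \<le> k \<and> k \<le> i \<and> i + 2 \<le> t \<and> t \<le> m \<and> 3 \<le> l \<and> l \<le> t - i" by (simp only: mem_Collect_eq)
  then obtain i k t l where a: "r = commutator_word (i - k, i) (t - (i + l), t)"
    "1 \<le> k" "k \<le> i" "i + 2 \<le> t" "t \<le> m" "3 \<le> l" "l \<le> t - i" by (elim exE conjE)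
  have "i - k < i \<and> i + 2 \<le> t \<and> t \<le> m \<and> t - (i + l) + i + 3 \<le> t \<and> r = commutator_word (i - k, i) (t - (i + l), t)"
    using a by auto
  then show ?thesis by blast
next
  assume "r \<in> {[((t - k, t), False)] @ inv_word [((j - k, j), True), ((t - (j + 1), t), False), ((j - k, j), False)] | j k t.
        1 \<le> k \<and> k \<le> j \<and> j + 2 \<le> t \<and> t \<le> m}"
  then have "\<exists>i k t. r = [((t - k, t), False)] @ inv_word [((i - k, i), True), ((t - (i + 1), t), False), ((i - k, i), False)] \<and>
    1 \<le> k \<and> k \<le> i \<and> i + 2 \<le> t \<and> t \<le> m" by (simp only: mem_Collect_eq)
  then obtain i k t where a: "r = [((t - k, t), False)] @ inv_word [((i - k, i), True), ((t - (i + 1), t), False), ((i - k, i), False)]"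
    "1 \<le> k" "k \<le> i" "i + 2 \<le> t" "t \<le> m" by (elim exE conjE)
  have e: "t - k = t - i + (i - k)" using a by auto
  have r1: "r = [((t - i + (i - k), t), False), ((i - k, i), True), ((t - (i + 1), t), True), ((i - k, i), False)]"
    using a(1) by (simp add: inv_word_def e)
  have c: "i - k < i" "i + 2 \<le> t" "t \<le> m" using a by auto
  show ?thesis
    by (rule disjI2, rule exI[of _ "i - k"], rule exI[of _ i], rule exI[of _ t]) (use r1 c in simp)
qed

lemma Phi_rel:
  assumes "r \<in> comm_rels m"
  shows "eqL m (Phi r) []"
  using comm_rels_cases[OF assms]
proof
  assume "\<exists>q i p j. q < i \<and> i + 2 \<le> j \<and> j \<le> m \<and> p + i + 3 \<le> j \<and> r = commutator_word (q, i) (p, j)"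
  then obtain q i p j where a: "q < i" "i + 2 \<le> j" "j \<le> m" "p + i + 3 \<le> j" "r = commutator_word (q, i) (p, j)"
    by (elim exE conjE)
  have "eqL m (blist q i @ blist p j @ rev (blist q i) @ rev (blist p j)) []"
    by (rule comm_rel_G[OF blist_GS blist_GS G_rel1[OF a(1-4)]]) (use a in auto)
  then show ?thesis using a by (simp add: commutator_word_def)
next
  assume "\<exists>q i j. q < i \<and> i + 2 \<le> j \<and> j \<le> m \<and>
            r = [((j - i + q, j), False), ((q, i), True), ((j - i - 1, j), True), ((q, i), False)]"
  then obtain q i j where a: "q < i" "i + 2 \<le> j" "j \<le> m"
    "r = [((j - i + q, j), False), ((q, i), True), ((j - i - 1, j), True), ((q, i), False)]"
    by (elim exE conjE)
  have "eqL m (blist (j - i + q) j @ rev (blist q i) @ rev (blist (j - i - 1) j) @ blist q i) []"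
    by (rule conj_rel_G[OF blist_GS blist_GS blist_GS G_rel2[OF a(1-3)]]) (use a in auto)
  then show ?thesis using a by simp
qed

lemma Phi_resp: "eqP m x y \<Longrightarrow> eqL m (Phi x) (Phi y)"
proof (induction rule: pres_eq.induct)
  case (refl w) then show ?case by (intro eqL_refl Phi_GS)
next
  case (sym u v) show ?case using sym.IH by (rule eqL_sym)
next
  case (trans u v w) show ?case using trans.IH by (rule eqL_trans)
next
  case (cancel a u v e)
  obtain p j where a: "a = (p, j)" by (cases a)
  have bG: "set (blist p j) \<subseteq> GS m" using cancel a by (intro blist_GS) auto
  have uv: "set (Phi u) \<subseteq> GS m" "set (Phi v) \<subseteq> GS m" using Phi_GS[of u m] Phi_GS[of v m] cancel by auto
  show ?case
  proof (cases e)
    case True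
    then show ?thesis using eqL_rev_ctx'[OF bG uv] a by (simp add: Phi_append)
  next
    case False
    then show ?thesis using eqL_rev_ctx[OF bG uv] a by (simp add: Phi_append)
  qed
next
  case (relator r u v)
  have uv: "set (Phi u) \<subseteq> GS m" "set (Phi v) \<subseteq> GS m" using Phi_GS[of u m] Phi_GS[of v m] relator by auto
  show ?case using eqL_ctx[OF Phi_rel[OF relator(1)] uv] by (simp add: Phi_append)
qed


abbreviation GG :: "nat \<Rightarrow> nat word set monoid" where
  "GG m \<equiv> presented_group (GS m) (GR m)"
abbreviation cG :: "nat \<Rightarrow> nat word \<Rightarrow> nat word set" where
  "cG m w \<equiv> pres_class (GS m) (GR m) w"
abbreviation PP :: "nat \<Rightarrow> (nat \<times> nat) word set monoid" where
  "PP m \<equiv> presented_group (comm_gens m) (comm_rels m)"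
abbreviation cP :: "nat \<Rightarrow> (nat \<times> nat) word \<Rightarrow> (nat \<times> nat) word set" where
  "cP m w \<equiv> pres_class (comm_gens m) (comm_rels m) w"

lemma TW_eq: "TW (m + 2) = GG m"
  by (simp add: TW_def GS_def GR_def)

lemma map_fst_gen_word[simp]: "map fst (gen_word l) = l"
  by (induction l) auto

lemma map_fst_inv_word: "map fst (inv_word w) = rev (map fst w)"
  by (simp add: inv_word_def case_prod_beta rev_map)

lemma cG_gen: "w \<in> words (GS m) \<Longrightarrow> cG m w = cG m (gen_word (map fst w))"
  by (rule pres_class_eq[OF TW_word_eq_gen[of w m, unfolded GS_def[symmetric] GR_def[symmetric]]])
    (simp add: GS_def)

definition sdiff :: "nat set \<Rightarrow> nat set \<Rightarrow> nat set" where
  "sdiff A B = (A - B) \<union> (B - A)"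

definition par :: "nat list \<Rightarrow> nat set" where
  "par w = fst (act w ({}, []))"

lemma act_fst_Cons: "fst (act (i # w) pt) = flip (fst (act w pt)) i"
  by (cases "act w pt") simp

lemma flip_sdiff: "flip (sdiff T B) i = sdiff T (flip B i)"
  by (auto simp: sdiff_def flip_def)

lemma act_fst: "fst (act w (T, x)) = sdiff T (fst (act w ({}, y)))"
proof (induction w)
  case Nil then show ?case by (simp add: sdiff_def)
next
  case (Cons i w)
  show ?case unfolding act_fst_Cons Cons flip_sdiff ..
qed

lemma par_append: "par (u @ v) = sdiff (par v) (par u)"
  unfolding par_def act_append using act_fst[of u "fst (act v ({}, []))" "snd (act v ({}, []))" "[]"]
  by (metis prod.collapse)

lemma par_Cons: "par (i # u) = sdiff (par u) (par [i])"
  using par_append[of "[i]" u] by simp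

lemma par_rev: "par (rev u) = par u"
proof (induction u)
  case Nil then show ?case by simp
next
  case (Cons i u)
  show ?case using Cons par_append[of "rev u" "[i]"] par_Cons[of i u]
    by (auto simp: sdiff_def)
qed

lemma par_comm: "par (a @ b @ rev a @ rev b) = {}"
  using par_append[of a "b @ rev a @ rev b"] par_append[of b "rev a @ rev b"]
    par_append[of "rev a" "rev b"] par_rev[of a] par_rev[of b]
  by (auto simp: sdiff_def)


lemma GG_carrier: "carrier (GG m) = cG m ` words (GS m)"
  by (simp add: presented_group_def)

lemma par_Nil: "par [] = {}" by (simp add: par_def)

lemma dset_witness:
  assumes "h \<in> derived_set (GG m) (carrier (GG m))"
  shows "\<exists>w. w \<in> words (GS m) \<and> h = cG m w \<and> par (map fst w) = {}"
proof -
  obtain h1 h2 where h: "h1 \<in> carrier (GG m)" "h2 \<in> carrier (GG m)"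
    "h = h1 \<otimes>\<^bsub>GG m\<^esub> h2 \<otimes>\<^bsub>GG m\<^esub> inv\<^bsub>GG m\<^esub> h1 \<otimes>\<^bsub>GG m\<^esub> inv\<^bsub>GG m\<^esub> h2"
    using assms by blast
  obtain u v where uv: "u \<in> words (GS m)" "v \<in> words (GS m)" "h1 = cG m u" "h2 = cG m v"
    using h(1,2) by (auto simp: GG_carrier)
  have "h = cG m (u @ v @ inv_word u @ inv_word v)"
    using uv h(3) by (simp add: pres_inv pres_mult)
  moreover have "par (map fst (u @ v @ inv_word u @ inv_word v)) = {}"
    using par_comm[of "map fst u" "map fst v"] by (simp add: map_fst_inv_word)
  ultimately show ?thesis using uv by (intro exI[of _ "u @ v @ inv_word u @ inv_word v"]) auto
qed

lemma derived_witness: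
  assumes "g \<in> derived (GG m) (carrier (GG m))"
  shows "\<exists>w. w \<in> words (GS m) \<and> g = cG m w \<and> par (map fst w) = {}"
  using assms unfolding derived_def
proof (induction rule: generate.induct)
  case one
  show ?case by (intro exI[of _ "[]"]) (simp add: pres_class_Nil par_Nil)
next
  case (incl h) then show ?case by (rule dset_witness)
next
  case (inv h)
  then obtain w where w: "w \<in> words (GS m)" "h = cG m w" "par (map fst w) = {}"
    using dset_witness by blast
  have "inv\<^bsub>GG m\<^esub> h = cG m (inv_word w)" using w by (simp add: pres_inv)
  moreover have "par (map fst (inv_word w)) = {}" using w by (simp add: map_fst_inv_word par_rev)
  ultimately show ?case using w by (intro exI[of _ "inv_word w"]) auto
next
  case (eng h1 h2)
  then obtain w1 w2 where w: "w1 \<in> words (GS m)" "h1 = cG m w1" "par (map fst w1) = {}"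
    "w2 \<in> words (GS m)" "h2 = cG m w2" "par (map fst w2) = {}" by blast
  have "h1 \<otimes>\<^bsub>GG m\<^esub> h2 = cG m (w1 @ w2)" using w by (simp add: pres_mult)
  moreover have "par (map fst (w1 @ w2)) = {}" using w by (simp add: par_append sdiff_def)
  ultimately show ?case using w by (intro exI[of _ "w1 @ w2"]) auto
qed

lemma cG_inv_gen: "set l \<subseteq> GS m \<Longrightarrow> inv\<^bsub>GG m\<^esub> (cG m (gen_word l)) = cG m (gen_word (rev l))"
proof -
  assume l: "set l \<subseteq> GS m"
  have "inv\<^bsub>GG m\<^esub> (cG m (gen_word l)) = cG m (inv_word (gen_word l))" using l by (simp add: pres_inv)
  also have "\<dots> = cG m (gen_word (map fst (inv_word (gen_word l))))" using l by (intro cG_gen) simp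
  also have "\<dots> = cG m (gen_word (rev l))" by (simp add: map_fst_inv_word)
  finally show ?thesis .
qed

lemma cG_mult_gen: "set a \<subseteq> GS m \<Longrightarrow> set b \<subseteq> GS m \<Longrightarrow>
   cG m (gen_word a) \<otimes>\<^bsub>GG m\<^esub> cG m (gen_word b) = cG m (gen_word (a @ b))"
  by (simp add: pres_mult)

lemma eqL_cG: "eqL m a b \<Longrightarrow> cG m (gen_word a) = cG m (gen_word b)"
  unfolding eqL_def by (rule pres_class_eq)

lemma blist_derived:
  assumes "p < j" "j \<le> m"
  shows "cG m (gen_word (blist p j)) \<in> derived (GG m) (carrier (GG m))"
proof -
  let ?L = "[j - p..<j]"
  let ?A = "?L @ [j + 1] @ rev ?L"
  let ?B = "?L @ [j] @ rev ?L"
  have LG: "set ?L \<subseteq> GS m" using assms by auto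
  have AG: "set ?A \<subseteq> GS m" "set ?B \<subseteq> GS m" using assms by auto
  have ra: "rev ?A = ?A" "rev ?B = ?B" by simp_all
  have c: "cG m (gen_word ?A) \<otimes>\<^bsub>GG m\<^esub> cG m (gen_word ?B) \<otimes>\<^bsub>GG m\<^esub> inv\<^bsub>GG m\<^esub> (cG m (gen_word ?A))
     \<otimes>\<^bsub>GG m\<^esub> inv\<^bsub>GG m\<^esub> (cG m (gen_word ?B)) = cG m (gen_word (?A @ ?B @ ?A @ ?B))"
    using AG by (simp only: cG_inv_gen ra cG_mult_gen set_append Un_subset_iff append_assoc)
  have jG: "j \<in> GS m" "j + 1 \<in> GS m" using assms by auto
  have e1: "eqL m ((?L @ [j + 1]) @ rev ?L @ ?L @ ([j] @ rev ?L @ ?L @ [j + 1] @ rev ?L @ ?L @ [j] @ rev ?L)) ((?L @ [j + 1]) @ ([j] @ rev ?L @ ?L @ [j + 1] @ rev ?L @ ?L @ [j] @ rev ?L))"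
    by (rule eqL_rev_ctx') (use LG AG jG in auto)
  have e2: "eqL m ((?L @ [j + 1, j]) @ rev ?L @ ?L @ ([j + 1] @ rev ?L @ ?L @ [j] @ rev ?L)) ((?L @ [j + 1, j]) @ ([j + 1] @ rev ?L @ ?L @ [j] @ rev ?L))"
    by (rule eqL_rev_ctx') (use LG AG jG in auto)
  have e3: "eqL m ((?L @ [j + 1, j, j + 1]) @ rev ?L @ ?L @ ([j] @ rev ?L)) ((?L @ [j + 1, j, j + 1]) @ ([j] @ rev ?L))"
    by (rule eqL_rev_ctx') (use LG AG jG in auto)
  have "eqL m (?A @ ?B @ ?A @ ?B) (blist p j)"
    using eqL_trans[OF eqL_trans[OF e1[simplified] e2[simplified]] e3[simplified]]
    by (simp add: blist_def)
  then have "cG m (gen_word (?A @ ?B @ ?A @ ?B)) = cG m (gen_word (blist p j))" by (rule eqL_cG)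
  moreover have "cG m (gen_word ?A) \<in> carrier (GG m)" "cG m (gen_word ?B) \<in> carrier (GG m)"
    using AG by (auto intro: pres_class_carrier)
  ultimately have "cG m (gen_word (blist p j)) \<in> derived_set (GG m) (carrier (GG m))"
    using c by blast
  then show ?thesis unfolding derived_def by (rule generate.incl)
qed


lemma phi_der:
  "x \<in> words (comm_gens m) \<Longrightarrow> cG m (gen_word (Phi x)) \<in> derived (GG m) (carrier (GG m))"
proof (induction x rule: Phi.induct)
  case 1
  interpret G: group "GG m" by (rule presented_group_is_group)
  have "subgroup (derived (GG m) (carrier (GG m))) (GG m)" by (rule G.derived_is_subgroup) simp
  then show ?case by (simp add: pres_class_Nil subgroup.one_closed)
next
  case (2 p j e x)
  interpret G: group "GG m" by (rule presented_group_is_group)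
  have sg: "subgroup (derived (GG m) (carrier (GG m))) (GG m)" by (rule G.derived_is_subgroup) simp
  have pj: "p < j" "j \<le> m" using 2 by auto
  have bG: "set (blist p j) \<subseteq> GS m" using blist_GS pj by simp
  have xG: "set (Phi x) \<subseteq> GS m" using Phi_GS 2 by simp
  have IH: "cG m (gen_word (Phi x)) \<in> derived (GG m) (carrier (GG m))" using 2 by simp
  have bd: "cG m (gen_word (blist p j)) \<in> derived (GG m) (carrier (GG m))" by (rule blist_derived[OF pj])
  have l: "cG m (gen_word (if e then rev (blist p j) else blist p j)) \<in> derived (GG m) (carrier (GG m))"
  proof (cases e)
    case True
    then show ?thesis using subgroup.m_inv_closed[OF sg bd] cG_inv_gen[OF bG] by simp
  next
    case False then show ?thesis using bd by simp
  qed
  have "cG m (gen_word (Phi (((p, j), e) # x))) =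
     cG m (gen_word (if e then rev (blist p j) else blist p j)) \<otimes>\<^bsub>GG m\<^esub> cG m (gen_word (Phi x))"
    using cG_mult_gen[of "if e then rev (blist p j) else blist p j" m "Phi x"] bG xG by simp
  then show ?case using subgroup.m_closed[OF sg l IH] by simp
qed

lemma phi_surj:
  assumes "g \<in> derived (GG m) (carrier (GG m))"
  shows "\<exists>x\<in>words (comm_gens m). g = cG m (gen_word (Phi x))"
proof -
  obtain w where w: "w \<in> words (GS m)" "g = cG m w" "par (map fst w) = {}"
    using derived_witness[OF assms] by blast
  obtain T' x' where a: "act (map fst w) ({}, []) = (T', x')" by (cases "act (map fst w) ({}, [])")
  have T': "T' = {}" using w(3) a by (simp add: par_def)
  have v0: "valid m {}" by (simp add: valid_def)
  have wG: "set (map fst w) \<subseteq> GS m" using words_GS[OF w(1)] .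
  have x': "x' \<in> words (comm_gens m)" using act_valid[OF v0 wG, of "[]"] a by simp
  have sw0: "sw m {} = []" by (simp add: sw_def fl_def)
  have "eqL m (map fst w @ sw m {} @ Phi []) (sw m T' @ Phi x')"
    using K3[OF v0 wG, of "[]"] a by simp
  then have "eqL m (map fst w) (Phi x')" using sw0 T' by simp
  then have "cG m (gen_word (map fst w)) = cG m (gen_word (Phi x'))" by (rule eqL_cG)
  then have "g = cG m (gen_word (Phi x'))" using w cG_gen by simp
  then show ?thesis using x' by blast
qed

lemma phi_inj:
  assumes x: "x \<in> words (comm_gens m)" and y: "y \<in> words (comm_gens m)"
    and e: "cG m (gen_word (Phi x)) = cG m (gen_word (Phi y))"
  shows "eqP m x y"
proof -
  have "pres_eq (GS m) (GR m) (gen_word (Phi x)) (gen_word (Phi y))"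
    using pres_class_eqD[OF e] Phi_GS[OF y] by simp
  then have "peq m (act (Phi x) ({}, [])) (act (Phi y) ({}, []))"
    using act_inv[of m "gen_word (Phi x)" "gen_word (Phi y)" "{}" "[]"] by (simp add: valid_def)
  then show ?thesis using K2[OF x, of "[]"] K2[OF y, of "[]"] by (simp add: peq_def)
qed

theorem theorem1p1:
  fixes m :: nat
  assumes "1 \<le> m"
  shows "\<exists>\<phi>. \<phi> \<in> iso (comm_pres m)
              ((TW (m + 2)) \<lparr> carrier := derived (TW (m + 2)) (carrier (TW (m + 2))) \<rparr>)
           \<and> (\<forall>p j. p < j \<and> j \<le> m \<longrightarrow>
                 \<phi> (pres_class (comm_gens m) (comm_rels m) [((p, j), False)]) = beta (m + 2) p j)"
proof -
  define \<phi> where "\<phi> X = cG m (gen_word (Phi (SOME x. x \<in> X)))" for X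
  let ?D = "derived (GG m) (carrier (GG m))"
  have phi: "\<phi> (cP m x) = cG m (gen_word (Phi x))" if x: "x \<in> words (comm_gens m)" for x
  proof -
    let ?y = "SOME y. y \<in> cP m x"
    have "?y \<in> cP m x" by (rule someI[of _ x]) (rule pres_class_self[OF x])
    then have "eqP m x ?y" by (simp add: pres_class_def)
    then have "eqL m (Phi x) (Phi ?y)" by (rule Phi_resp)
    then show ?thesis unfolding \<phi>_def by (simp add: eqL_cG)
  qed
  have carP: "carrier (comm_pres m) = cP m ` words (comm_gens m)"
    by (simp add: comm_pres_def presented_group_def)
  have hom: "\<phi> \<in> hom (comm_pres m) ((GG m) \<lparr> carrier := ?D \<rparr>)"
  proof (rule homI)
    fix X assume "X \<in> carrier (comm_pres m)"
    then obtain x where "x \<in> words (comm_gens m)" "X = cP m x" using carP by auto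
    then show "\<phi> X \<in> carrier ((GG m) \<lparr> carrier := ?D \<rparr>)" using phi phi_der by simp
  next
    fix X Y assume "X \<in> carrier (comm_pres m)" "Y \<in> carrier (comm_pres m)"
    then obtain x y where xy: "x \<in> words (comm_gens m)" "X = cP m x" "y \<in> words (comm_gens m)" "Y = cP m y"
      using carP by auto
    have "X \<otimes>\<^bsub>comm_pres m\<^esub> Y = cP m (x @ y)" using xy by (simp add: comm_pres_def pres_mult)
    then have "\<phi> (X \<otimes>\<^bsub>comm_pres m\<^esub> Y) = cG m (gen_word (Phi x @ Phi y))"
      using phi xy by (simp add: Phi_append)
    also have "\<dots> = \<phi> X \<otimes>\<^bsub>GG m\<^esub> \<phi> Y"
      using phi xy cG_mult_gen[of "Phi x" m "Phi y"] Phi_GS[of x m] Phi_GS[of y m] by simp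
    finally show "\<phi> (X \<otimes>\<^bsub>comm_pres m\<^esub> Y) = \<phi> X \<otimes>\<^bsub>(GG m) \<lparr> carrier := ?D \<rparr>\<^esub> \<phi> Y" by simp
  qed
  have inj: "inj_on \<phi> (carrier (comm_pres m))"
  proof (rule inj_onI)
    fix X Y assume "X \<in> carrier (comm_pres m)" "Y \<in> carrier (comm_pres m)" "\<phi> X = \<phi> Y"
    then obtain x y where xy: "x \<in> words (comm_gens m)" "X = cP m x" "y \<in> words (comm_gens m)" "Y = cP m y"
      "\<phi> X = \<phi> Y" using carP by auto
    then have "eqP m x y" using phi_inj[of x m y] phi by simp
    then show "X = Y" using xy pres_class_eq by metis
  qed
  have img: "\<phi> ` carrier (comm_pres m) = ?D"
  proof
    show "\<phi> ` carrier (comm_pres m) \<subseteq> ?D" using carP phi phi_der by auto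
    show "?D \<subseteq> \<phi> ` carrier (comm_pres m)"
    proof
      fix g assume "g \<in> ?D"
      then obtain x where x: "x \<in> words (comm_gens m)" "g = cG m (gen_word (Phi x))" using phi_surj by blast
      then have "g = \<phi> (cP m x)" using phi by simp
      moreover have "cP m x \<in> carrier (comm_pres m)" using carP x by simp
      ultimately show "g \<in> \<phi> ` carrier (comm_pres m)" by blast
    qed
  qed
  have gens: "\<phi> (cP m [((p, j), False)]) = beta (m + 2) p j" if "p < j" "j \<le> m" for p j
  proof -
    have "[((p, j), False)] \<in> words (comm_gens m)" using that by simp
    then have "\<phi> (cP m [((p, j), False)]) = cG m (gen_word (blist p j))" using phi by simp
    then show ?thesis by (simp add: beta_def beta_word_def blist_def GS_def GR_def)
  qed
  have "\<phi> \<in> iso (comm_pres m) ((GG m) \<lparr> carrier := ?D \<rparr>)"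
    unfolding iso_def using hom inj img by (simp add: bij_betw_def)
  then show ?thesis unfolding TW_eq using gens by blast
qed

end
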